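(* Let $I$ be a nonempty open real interval and let $(f,g)\in\mathscr{B}_0(I)$. Consider the statements: (i) There exists a continuous strictly monotone function $h:I\to\mathbb{R}$ such that \[ \Big(\frac{g}{f}\Big)^{-1}\!\left(\frac{g(x)+g(y)}{f(x)+f(y)}\right)=h^{-1}\Big(\frac{h(x)+h(y)}{2}\Big)\qquad\text{for all } x,y\in I. \tag{$*$} \] (ii) There exist real constants $\alpha,\beta,\gamma$ such that $\alpha f^2+\beta fg+\gamma g^2=1$ on $I$. (iii) (Applicable when $(f,g)\in\mathscr{B}_1(I)$.) Equation $( * )$ holds with $h$ being a primitive function of $W^{1,0}_{f,g}$. (iv) (Applicable when $(f,g)\in\mathscr{B}_2(I)$.) There exists a real constant $\delta$ such that $W^{2,1}_{f,g}=\delta\,(W^{1,0}_{f,g})^3$ on $I$. (v) (Applicable when $(f,g)\in\mathscr{B}_2(I)$.) $\Psi_{f,g}$ is differentiable and $\Psi'_{f,g}=2\Phi_{f,g}\Psi_{f,g}$ on $I$. Then (i) and (ii) are equivalent; if in addition $(f,g)\in\mathscr{B}_1(I)$, then (i), (ii), (iii) are equivalent; and if in addition $(f,g)\in\mathscr{B}_2(I)$, then (i)–(v) are all equivalent.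
   Context: $\mathscr{B}_0(I)$ is the class of pairs $(f,g)$ of functions $I\to\mathbb{R}$ such that $f$ is everywhere positive on $I$ and $g/f$ is strictly monotone and continuous on $I$. For $n\geq1$, $\mathscr{B}_n(I)$ is the class of pairs $(f,g)$ such that $f$ is everywhere positive on $I$, $f,g$ are $n$ times continuously differentiable on $I$, and $(g/f)'$ is nowhere zero on $I$. For such pairs and $i,j\in\{0,\dots,n\}$, $W^{i,j}_{f,g}:=f^{(i)}g^{(j)}-f^{(j)}g^{(i)}$ (the determinant with first row $f^{(i)},f^{(j)}$ and second row $g^{(i)},g^{(j)}$), and $\Phi_{f,g}:=W^{2,0}_{f,g}/W^{1,0}_{f,g}$, $\Psi_{f,g}:=-W^{2,1}_{f,g}/W^{1,0}_{f,g}$. *)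

theory Defs
  imports "HOL-Analysis.Analysis"
begin

definition strictly_monotone_on :: "real set \<Rightarrow> (real \<Rightarrow> real) \<Rightarrow> bool" where
  "strictly_monotone_on I \<phi> \<longleftrightarrow> strict_mono_on I \<phi> \<or> strict_antimono_on I \<phi>"

definition nderiv :: "nat \<Rightarrow> (real \<Rightarrow> real) \<Rightarrow> real \<Rightarrow> real" where
  "nderiv k f = (deriv ^^ k) f"

definition C_n_on :: "nat \<Rightarrow> real set \<Rightarrow> (real \<Rightarrow> real) \<Rightarrow> bool" where
  "C_n_on n I f \<longleftrightarrow>
     (\<forall>k<n. \<forall>x\<in>I. nderiv k f differentiable (at x)) \<and>
     (\<forall>k\<le>n. continuous_on I (nderiv k f))"

definition B0 :: "real set \<Rightarrow> (real \<Rightarrow> real) \<Rightarrow> (real \<Rightarrow> real) \<Rightarrow> bool" where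
  "B0 I f g \<longleftrightarrow> (\<forall>x\<in>I. f x > 0) \<and>
     strictly_monotone_on I (\<lambda>x. g x / f x) \<and> continuous_on I (\<lambda>x. g x / f x)"

definition Bn :: "nat \<Rightarrow> real set \<Rightarrow> (real \<Rightarrow> real) \<Rightarrow> (real \<Rightarrow> real) \<Rightarrow> bool" where
  "Bn n I f g \<longleftrightarrow> (\<forall>x\<in>I. f x > 0) \<and> C_n_on n I f \<and> C_n_on n I g \<and>
     (\<forall>x\<in>I. deriv (\<lambda>t. g t / f t) x \<noteq> 0)"

definition W :: "nat \<Rightarrow> nat \<Rightarrow> (real \<Rightarrow> real) \<Rightarrow> (real \<Rightarrow> real) \<Rightarrow> real \<Rightarrow> real" where
  "W i j f g x = nderiv i f x * nderiv j g x - nderiv j f x * nderiv i g x"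

definition Phi :: "(real \<Rightarrow> real) \<Rightarrow> (real \<Rightarrow> real) \<Rightarrow> real \<Rightarrow> real" where
  "Phi f g x = W 2 0 f g x / W 1 0 f g x"

definition Psi :: "(real \<Rightarrow> real) \<Rightarrow> (real \<Rightarrow> real) \<Rightarrow> real \<Rightarrow> real" where
  "Psi f g x = - W 2 1 f g x / W 1 0 f g x"

definition eq_star :: "real set \<Rightarrow> (real \<Rightarrow> real) \<Rightarrow> (real \<Rightarrow> real) \<Rightarrow> (real \<Rightarrow> real) \<Rightarrow> bool" where
  "eq_star I f g h \<longleftrightarrow> (\<forall>x\<in>I. \<forall>y\<in>I.
     the_inv_into I (\<lambda>t. g t / f t) ((g x + g y) / (f x + f y)) =
     the_inv_into I h ((h x + h y) / 2))"

end

theory Submission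
  imports Defs
begin

lemma interval_between:
  fixes U :: "real set"
  shows "is_interval U \<Longrightarrow> a \<in> U \<Longrightarrow> b \<in> U \<Longrightarrow> a \<le> t \<Longrightarrow> t \<le> b \<Longrightarrow> t \<in> U"
  unfolding is_interval_1 by blast

lemma antideriv_open_interval:
  fixes F :: "real \<Rightarrow> real"
  assumes "open U" "is_interval U" "continuous_on U F" "c \<in> U"
  shows "\<exists>H. \<forall>x\<in>U. (H has_real_derivative F x) (at x)"
proof -
  define H where "H t = (if c \<le> t then integral {c..t} F else - integral {t..c} F)" for t
  have "(H has_real_derivative F x) (at x)" if xU: "x \<in> U" for x
  proof -
    obtain d where d: "d > 0" "ball x d \<subseteq> U" using assms(1) xU open_contains_ball by blast
    define a where "a = min c (x - d/2)"
    define b where "b = max c (x + d/2)"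
    have "x - d/2 \<in> ball x d" "x + d/2 \<in> ball x d" using d(1) by (simp_all add: dist_real_def)
    then have "x - d/2 \<in> U" "x + d/2 \<in> U" using d(2) by blast+
    then have aU: "a \<in> U" and bU: "b \<in> U" unfolding a_def b_def using assms(4) 
      by (simp_all add: min_def max_def)
    have sub: "{a..b} \<subseteq> U" using interval_between[OF assms(2) aU bU] by auto
    have cont: "continuous_on {a..b} F" using continuous_on_subset[OF assms(3) sub] .
    have intg: "F integrable_on {s..t}" if "a \<le> s" "t \<le> b" for s t
      by (intro integrable_continuous_real continuous_on_subset[OF cont]) (use that in auto)
    have ac: "a \<le> c" "c \<le> b" unfolding a_def b_def by auto
    have eqH: "H t = integral {a..t} F - integral {a..c} F" if "t \<in> {a..b}" for t
    proof (cases "c \<le> t")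
      case True
      have "integral {a..c} F + integral {c..t} F = integral {a..t} F"
        by (rule Henstock_Kurzweil_Integration.integral_combine) (use True ac that intg in auto)
      then show ?thesis using True by (simp add: H_def)
    next
      case False
      have "integral {a..t} F + integral {t..c} F = integral {a..c} F"
        by (rule Henstock_Kurzweil_Integration.integral_combine) (use False ac that intg in auto)
      then show ?thesis using False by (simp add: H_def)
    qed
    have xin: "x \<in> {a<..<b}" unfolding a_def b_def using d by auto
    have "((\<lambda>t. integral {a..t} F - integral {a..c} F) has_real_derivative F x) (at x within {a..b})"
      using integral_has_real_derivative[OF cont] xin
      by (auto intro!: derivative_eq_intros)
    moreover have "at x within {a..b} = at x"
      by (rule at_within_interior) (use xin in auto)
    ultimately have "((\<lambda>t. integral {a..t} F - integral {a..c} F) has_real_derivative F x) (at x)"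
      by simp
    then show ?thesis
      by (rule has_field_derivative_transform_within_open[where S="{a<..<b}"]) (use xin eqH in auto)
  qed
  then show ?thesis by blast
qed

lemma smo_cases:
  assumes "strictly_monotone_on I \<phi>"
  shows "(\<forall>x\<in>I. \<forall>y\<in>I. x < y \<longrightarrow> \<phi> x < \<phi> y) \<or> (\<forall>x\<in>I. \<forall>y\<in>I. x < y \<longrightarrow> \<phi> y < \<phi> x)"
  using assms unfolding strictly_monotone_on_def monotone_on_def by auto

lemma smo_inj:
  assumes "strictly_monotone_on I \<phi>"
  shows "inj_on \<phi> I"
proof (rule inj_onI)
  fix x y assume xy: "x \<in> I" "y \<in> I" "\<phi> x = \<phi> y"
  show "x = y"
  proof (rule ccontr)
    assume "x \<noteq> y"
    then consider "x < y" | "y < x" by linarith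
    then show False
    proof cases
      case 1
      then show False using smo_cases[OF assms] xy by force
    next
      case 2
      then show False using smo_cases[OF assms] xy by force
    qed
  qed
qed

lemma image_interval:
  fixes \<phi> :: "real \<Rightarrow> real"
  assumes "continuous_on I \<phi>" "is_interval I"
  shows "is_interval (\<phi> ` I)"
proof -
  have "connected I" using assms(2) is_interval_connected by blast
  then have "connected (\<phi> ` I)" using connected_continuous_image assms(1) by blast
  then show ?thesis using is_interval_connected_1 by blast
qed

lemma value_between:
  fixes \<phi> :: "real \<Rightarrow> real"
  assumes "continuous_on I \<phi>" "is_interval I" "x \<in> I" "y \<in> I"
    and "min (\<phi> x) (\<phi> y) \<le> c" "c \<le> max (\<phi> x) (\<phi> y)"
  shows "\<exists>z\<in>I. \<phi> z = c"
proof -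
  have ii: "is_interval (\<phi> ` I)" using image_interval[OF assms(1,2)] .
  have "\<phi> x \<in> \<phi> ` I" "\<phi> y \<in> \<phi> ` I" using assms(3,4) by auto
  then have "c \<in> \<phi> ` I"
  proof (cases "\<phi> x \<le> \<phi> y")
    case True
    then show ?thesis using assms(5,6) interval_between[OF ii \<open>\<phi> x \<in> _\<close> \<open>\<phi> y \<in> _\<close>] by simp
  next
    case False
    then show ?thesis using assms(5,6) interval_between[OF ii \<open>\<phi> y \<in> _\<close> \<open>\<phi> x \<in> _\<close>] by simp
  qed
  then show ?thesis by auto
qed

lemma value_between_seg:
  fixes \<phi> :: "real \<Rightarrow> real"
  assumes "continuous_on {a..b} \<phi>" "a \<le> b"
    and "min (\<phi> a) (\<phi> b) \<le> c" "c \<le> max (\<phi> a) (\<phi> b)"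
  shows "\<exists>z\<in>{a..b}. \<phi> z = c"
  using value_between[OF assms(1) _ _ _ assms(3,4)] assms(2) by (auto simp: is_interval_cc)

lemma wavg_bounds:
  fixes a b p q :: real
  assumes "p > 0" "q > 0"
  shows "min a b \<le> (a*p + b*q)/(p+q)" "(a*p + b*q)/(p+q) \<le> max a b"
proof -
  have h1: "min a b * p \<le> a * p" "min a b * q \<le> b * q"
    using assms by (simp_all add: mult_right_mono less_imp_le)
  have "min a b * (p+q) \<le> a*p + b*q" using h1 by (simp add: distrib_left)
  then show "min a b \<le> (a*p + b*q)/(p+q)" using assms by (simp add: le_divide_eq)
  have h2: "a * p \<le> max a b * p" "b * q \<le> max a b * q"
    using assms by (simp_all add: mult_right_mono less_imp_le)
  have "a*p + b*q \<le> max a b * (p+q)" using h2 by (simp add: distrib_left)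
  then show "(a*p + b*q)/(p+q) \<le> max a b" using assms by (simp add: divide_le_eq)
qed

lemma eq_starI:
  assumes "inj_on (\<lambda>t. g t / f t) I" "inj_on h I"
    and "\<And>x y. x \<in> I \<Longrightarrow> y \<in> I \<Longrightarrow> \<exists>z\<in>I. g z / f z = (g x + g y) / (f x + f y) \<and> h z = (h x + h y)/2"
  shows "eq_star I f g h"
  unfolding eq_star_def
proof (intro ballI)
  fix x y assume xy: "x \<in> I" "y \<in> I"
  obtain z where z: "z \<in> I" "g z / f z = (g x + g y) / (f x + f y)" "h z = (h x + h y)/2"
    using assms(3)[OF xy] by blast
  have "the_inv_into I (\<lambda>t. g t / f t) ((g x + g y) / (f x + f y)) = z"
    by (rule the_inv_into_f_eq[OF assms(1)]) (use z in auto)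
  moreover have "the_inv_into I h ((h x + h y) / 2) = z"
    by (rule the_inv_into_f_eq[OF assms(2)]) (use z in auto)
  ultimately show "the_inv_into I (\<lambda>t. g t / f t) ((g x + g y) / (f x + f y)) = the_inv_into I h ((h x + h y) / 2)"
    by simp
qed

lemma M_between:
  fixes f g :: "real \<Rightarrow> real"
  assumes "f x > 0" "f y > 0"
  shows "min (g x / f x) (g y / f y) \<le> (g x + g y) / (f x + f y)"
    "(g x + g y) / (f x + f y) \<le> max (g x / f x) (g y / f y)"
proof -
  have e: "(g x + g y) / (f x + f y) = ((g x / f x) * f x + (g y / f y) * f y) / (f x + f y)"
    using assms by simp
  show "min (g x / f x) (g y / f y) \<le> (g x + g y) / (f x + f y)"
    unfolding e by (rule wavg_bounds(1)[OF assms])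
  show "(g x + g y) / (f x + f y) \<le> max (g x / f x) (g y / f y)"
    unfolding e by (rule wavg_bounds(2)[OF assms])
qed

lemma eq_starD:
  assumes "is_interval I" "\<forall>x\<in>I. f x > 0"
    and "continuous_on I (\<lambda>t. g t / f t)" "inj_on (\<lambda>t. g t / f t) I"
    and "continuous_on I h" "inj_on h I"
    and "eq_star I f g h" "x \<in> I" "y \<in> I"
  shows "\<exists>z\<in>I. g z / f z = (g x + g y) / (f x + f y) \<and> h z = (h x + h y)/2"
proof -
  let ?u = "\<lambda>t. g t / f t"
  let ?M = "(g x + g y) / (f x + f y)"
  obtain z1 where z1: "z1 \<in> I" "?u z1 = ?M"
    using value_between[OF assms(3,1,8,9)] M_between[of f x y g] assms(2,8,9) by auto
  have mm: "min (h x) (h y) \<le> (h x + h y)/2" "(h x + h y)/2 \<le> max (h x) (h y)"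
    by (simp_all add: min_def max_def)
  obtain z2 where z2: "z2 \<in> I" "h z2 = (h x + h y)/2"
    using value_between[OF assms(5,1,8,9) mm] by blast
  have "the_inv_into I ?u ?M = z1"
    by (rule the_inv_into_f_eq[OF assms(4)]) (use z1 in auto)
  moreover have "the_inv_into I h ((h x + h y)/2) = z2"
    by (rule the_inv_into_f_eq[OF assms(6)]) (use z2 in auto)
  ultimately have "z1 = z2" using assms(7,8,9) unfolding eq_star_def by auto
  then show ?thesis using z1 z2 by auto
qed

lemma prog_form:
  fixes Fs Gs :: "nat \<Rightarrow> real" and N :: nat
  assumes pos: "\<And>i. i \<le> N \<Longrightarrow> Fs i > 0"
    and dnz: "\<And>i. i < N \<Longrightarrow> Fs i * Gs (Suc i) - Gs i * Fs (Suc i) \<noteq> 0"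
    and mid: "\<And>i. i + 2 \<le> N \<Longrightarrow> Gs (i+1) * (Fs i + Fs (i+2)) = Fs (i+1) * (Gs i + Gs (i+2))"
    and four: "\<And>i. i + 3 \<le> N \<Longrightarrow>
      (Fs i + Fs (i+3)) * (Gs (i+1) + Gs (i+2)) = (Gs i + Gs (i+3)) * (Fs (i+1) + Fs (i+2))"
  shows "\<exists>\<alpha> \<beta> \<gamma>. \<forall>j\<le>N. \<alpha> * (Fs j)^2 + \<beta> * Fs j * Gs j + \<gamma> * (Gs j)^2 = 1"
proof (cases "N = 0")
  case True
  have "Fs 0 > 0" using pos by simp
  then show ?thesis using True
    by (intro exI[of _ "1/(Fs 0)^2"] exI[of _ 0] exI[of _ 0]) simp
next
  case False
  define D where "D i = Fs i * Gs (Suc i) - Gs i * Fs (Suc i)" for i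
  define k where "k = D 0"
  define \<mu> where "\<mu> i = (Fs i + Fs (i+2)) / Fs (i+1)" for i
  have RF: "Fs (i+2) = \<mu> i * Fs (i+1) - Fs i" if "i + 2 \<le> N" for i
    using pos[of "i+1"] that by (simp add: \<mu>_def field_simps)
  have RG: "Gs (i+2) = \<mu> i * Gs (i+1) - Gs i" if "i + 2 \<le> N" for i
  proof -
    have "Gs i + Gs (i+2) = Gs (i+1) * (Fs i + Fs (i+2)) / Fs (i+1)"
      using mid[OF that] pos[of "i+1"] that by (simp add: field_simps)
    then show ?thesis by (simp add: \<mu>_def field_simps)
  qed
  have Dstep: "D (i+1) = D i" if "i + 2 \<le> N" for i
  proof -
    have "D (i+1) = Fs (i+1) * Gs (i+2) - Gs (i+1) * Fs (i+2)" by (simp add: D_def)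
    also have "\<dots> = Fs (i+1) * (\<mu> i * Gs (i+1) - Gs i) - Gs (i+1) * (\<mu> i * Fs (i+1) - Fs i)"
      using RF[OF that] RG[OF that] by simp
    also have "\<dots> = D i" by (simp add: D_def algebra_simps)
    finally show ?thesis .
  qed
  have Dc: "D i = k" if "i < N" for i
    using that
  proof (induction i)
    case 0 then show ?case by (simp add: k_def)
  next
    case (Suc i)
    then show ?case using Dstep[of i] by simp
  qed
  have knz: "k \<noteq> 0" using dnz[of 0] False by (simp add: k_def D_def)
  have \<mu>step: "\<mu> (i+1) = \<mu> i" if "i + 3 \<le> N" for i
  proof -
    have e1: "i + 1 + 2 = i + 3" "i + 1 + 1 = i + 2" by simp_all
    have r1: "Fs (i+3) = \<mu> (i+1) * Fs (i+2) - Fs (i+1)" "Gs (i+3) = \<mu> (i+1) * Gs (i+2) - Gs (i+1)"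
      by (rule RF[of "i+1", unfolded e1, OF that], rule RG[of "i+1", unfolded e1, OF that])
    have r0: "Fs i = \<mu> i * Fs (i+1) - Fs (i+2)" "Gs i = \<mu> i * Gs (i+1) - Gs (i+2)"
      using RF[of i] RG[of i] that by simp_all
    have "0 = (Fs i + Fs (i+3)) * (Gs (i+1) + Gs (i+2)) - (Gs i + Gs (i+3)) * (Fs (i+1) + Fs (i+2))"
      using four[OF that] by simp
    also have "\<dots> = (\<mu> i - \<mu> (i+1)) * D (i+1)"
      unfolding r1 r0 by (simp add: D_def algebra_simps)
    finally have "(\<mu> i - \<mu> (i+1)) * D (i+1) = 0" by simp
    moreover have "D (i+1) = k" using Dc[of "i+1"] that by simp
    ultimately show ?thesis using knz by simp
  qed
  have \<mu>c: "\<mu> i = \<mu> 0" if "i + 2 \<le> N" for i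
    using that
  proof (induction i)
    case 0 then show ?case by simp
  next
    case (Suc i)
    then show ?case using \<mu>step[of i] by simp
  qed
  define m where "m = \<mu> 0"
  define E where "E w1 w2 i = (w1 * Gs i - w2 * Fs i)^2 + (w1 * Gs (i+1) - w2 * Fs (i+1))^2
      - m * (w1 * Gs i - w2 * Fs i) * (w1 * Gs (i+1) - w2 * Fs (i+1))" for w1 w2 i
  have Estep: "E w1 w2 (i+1) = E w1 w2 i" if "i + 2 \<le> N" for w1 w2 i
  proof -
    have a: "Fs (i+2) = m * Fs (i+1) - Fs i" "Gs (i+2) = m * Gs (i+1) - Gs i"
      using RF[OF that] RG[OF that] \<mu>c[OF that] by (simp_all add: m_def)
    have "E w1 w2 (i+1) = (w1 * Gs (i+1) - w2 * Fs (i+1))^2 + (w1 * Gs (i+2) - w2 * Fs (i+2))^2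
      - m * (w1 * Gs (i+1) - w2 * Fs (i+1)) * (w1 * Gs (i+2) - w2 * Fs (i+2))"
      by (simp add: E_def add.assoc)
    also have "\<dots> = E w1 w2 i" unfolding a by (simp add: E_def power2_eq_square algebra_simps)
    finally show ?thesis .
  qed
  have Ec: "E w1 w2 i = E w1 w2 0" if "i + 1 \<le> N" for w1 w2 i
    using that
  proof (induction i)
    case 0 then show ?case by simp
  next
    case (Suc i)
    then show ?case using Estep[of i w1 w2] by simp
  qed
  have Eval: "E (Fs j) (Gs j) 0 = k^2" if "j \<le> N" for j
  proof (cases "j < N")
    case True
    have "E (Fs j) (Gs j) 0 = E (Fs j) (Gs j) j" using Ec[of j] True by simp
    also have "\<dots> = (D j)^2" by (simp add: E_def D_def power2_eq_square algebra_simps)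
    also have "\<dots> = k^2" using Dc[OF True] by simp
    finally show ?thesis .
  next
    case F2: False
    then have jN: "j = N" using that by simp
    obtain n where n: "N = Suc n" using False not0_implies_Suc by blast
    have "E (Fs j) (Gs j) 0 = E (Fs j) (Gs j) n" using Ec[of n] n by simp
    also have "\<dots> = (D n)^2" using jN n by (simp add: E_def D_def power2_eq_square algebra_simps)
    also have "\<dots> = k^2" using Dc[of n] n by simp
    finally show ?thesis .
  qed
  define \<alpha> where "\<alpha> = ((Gs 0)^2 + (Gs 1)^2 - m * Gs 0 * Gs 1) / k^2"
  define \<beta> where "\<beta> = (- 2 * Fs 0 * Gs 0 - 2 * Fs 1 * Gs 1 + m * (Gs 0 * Fs 1 + Fs 0 * Gs 1)) / k^2"
  define \<gamma> where "\<gamma> = ((Fs 0)^2 + (Fs 1)^2 - m * Fs 0 * Fs 1) / k^2"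
  have Eform: "\<alpha> * w1^2 + \<beta> * w1 * w2 + \<gamma> * w2^2 = E w1 w2 0 / k^2" for w1 w2
    using knz by (simp add: \<alpha>_def \<beta>_def \<gamma>_def E_def field_simps power2_eq_square)
  show ?thesis
  proof (intro exI allI impI)
    fix j assume "j \<le> N"
    then show "\<alpha> * (Fs j)^2 + \<beta> * Fs j * Gs j + \<gamma> * (Gs j)^2 = 1"
      using Eform Eval knz by simp
  qed
qed

lemma quad3:
  fixes a b c u1 u2 u3 :: real
  assumes "a + b*u1 + c*u1^2 = 0" "a + b*u2 + c*u2^2 = 0" "a + b*u3 + c*u3^2 = 0"
    and "u1 \<noteq> u2" "u1 \<noteq> u3" "u2 \<noteq> u3"
  shows "a = 0 \<and> b = 0 \<and> c = 0"
proof -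
  have "(u1 - u2) * (b + c*(u1+u2)) = 0" using assms(1,2) by (simp add: power2_eq_square algebra_simps)
  then have e12: "b + c*(u1+u2) = 0" using assms(4) by simp
  have "(u1 - u3) * (b + c*(u1+u3)) = 0" using assms(1,3) by (simp add: power2_eq_square algebra_simps)
  then have e13: "b + c*(u1+u3) = 0" using assms(5) by simp
  have "c * (u2 - u3) = (b + c*(u1+u2)) - (b + c*(u1+u3))" by (simp add: algebra_simps)
  then have "c * (u2 - u3) = 0" using e12 e13 by simp
  then have c: "c = 0" using assms(6) by simp
  then have b: "b = 0" using e12 by simp
  then have "a = 0" using assms(1) c by simp
  then show ?thesis using b c by simp
qed

lemma quad_unique_pt:
  fixes F G :: "nat \<Rightarrow> real"
  assumes pos: "\<And>i. i < 3 \<Longrightarrow> F i > 0"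
    and dist: "\<And>i j. i < 3 \<Longrightarrow> j < 3 \<Longrightarrow> i \<noteq> j \<Longrightarrow> G i / F i \<noteq> G j / F j"
    and q1: "\<And>i. i < 3 \<Longrightarrow> a * (F i)^2 + b * F i * G i + c * (G i)^2 = 1"
    and q2: "\<And>i. i < 3 \<Longrightarrow> a' * (F i)^2 + b' * F i * G i + c' * (G i)^2 = 1"
  shows "a = a' \<and> b = b' \<and> c = c'"
proof -
  have z: "(a - a') + (b - b') * (G i / F i) + (c - c') * (G i / F i)^2 = 0" if "i < 3" for i
  proof -
    have "(a - a') * (F i)^2 + (b - b') * F i * G i + (c - c') * (G i)^2 = 0"
      using q1[OF that] q2[OF that] by (simp add: algebra_simps)
    then have "((a - a') * (F i)^2 + (b - b') * F i * G i + (c - c') * (G i)^2) / (F i)^2 = 0" by simp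
    moreover have "((a - a') * (F i)^2 + (b - b') * F i * G i + (c - c') * (G i)^2) / (F i)^2
       = (a - a') + (b - b') * (G i / F i) + (c - c') * (G i / F i)^2"
      using pos[OF that] by (simp add: field_simps power2_eq_square)
    ultimately show ?thesis by simp
  qed
  have "a - a' = 0 \<and> b - b' = 0 \<and> c - c' = 0"
    by (rule quad3[OF z[of 0] z[of 1] z[of 2]]) (use dist in auto)
  then show ?thesis by simp
qed

locale partB =
  fixes I :: "real set" and f g h :: "real \<Rightarrow> real"
  assumes Iopen: "open I" and Iint: "is_interval I" and Ine: "I \<noteq> {}"
    and fpos: "\<And>x. x \<in> I \<Longrightarrow> f x > 0"
    and ucont: "continuous_on I (\<lambda>t. g t / f t)" and uinj: "inj_on (\<lambda>t. g t / f t) I"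
    and hcont: "continuous_on I h" and hinj: "inj_on h I"
    and key: "\<And>x y. x \<in> I \<Longrightarrow> y \<in> I \<Longrightarrow>
       \<exists>z\<in>I. g z / f z = (g x + g y) / (f x + f y) \<and> h z = (h x + h y)/2"
begin

definition J where "J = h ` I"
definition hi where "hi = the_inv_into I h"
definition FF where "FF p = f (hi p)"
definition GG where "GG p = g (hi p)"

lemma hi_in: "p \<in> J \<Longrightarrow> hi p \<in> I"
  unfolding J_def hi_def using the_inv_into_into[OF hinj] by blast

lemma h_hi: "p \<in> J \<Longrightarrow> h (hi p) = p"
  unfolding J_def hi_def using f_the_inv_into_f[OF hinj] by blast

lemma hi_h: "x \<in> I \<Longrightarrow> hi (h x) = x"
  unfolding hi_def using the_inv_into_f_f[OF hinj] by blast

lemma Jint: "is_interval J"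
  unfolding J_def by (rule image_interval[OF hcont Iint])

lemma J_between: "p \<in> J \<Longrightarrow> r \<in> J \<Longrightarrow> p \<le> t \<Longrightarrow> t \<le> r \<Longrightarrow> t \<in> J"
  using interval_between[OF Jint] by blast

lemma FFpos: "p \<in> J \<Longrightarrow> FF p > 0"
  unfolding FF_def using fpos hi_in by blast

lemma keyJ:
  assumes "p \<in> J" "r \<in> J"
  shows "(p + r)/2 \<in> J \<and> GG ((p+r)/2) * (FF p + FF r) = FF ((p+r)/2) * (GG p + GG r)"
proof -
  obtain z where z: "z \<in> I" "g z / f z = (g (hi p) + g (hi r)) / (f (hi p) + f (hi r))"
      "h z = (h (hi p) + h (hi r))/2"
    using key[OF hi_in[OF assms(1)] hi_in[OF assms(2)]] by blast
  have hz: "h z = (p + r)/2" using z(3) h_hi assms by simp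
  then have mJ: "(p+r)/2 \<in> J" using z(1) unfolding J_def by force
  have hiz: "hi ((p+r)/2) = z" using hi_h[OF z(1)] hz by simp
  have fz: "f z > 0" using fpos z(1) by simp
  have fs: "f (hi p) + f (hi r) > 0" using fpos hi_in assms by (simp add: add_pos_pos)
  have "g z * (f (hi p) + f (hi r)) = f z * (g (hi p) + g (hi r))"
    using z(2) fz fs by (simp add: field_simps)
  then show ?thesis using mJ hiz by (simp add: FF_def GG_def)
qed

lemma Dnz:
  assumes "p \<in> J" "r \<in> J" "p \<noteq> r"
  shows "FF p * GG r - GG p * FF r \<noteq> 0"
proof
  assume a: "FF p * GG r - GG p * FF r = 0"
  have "hi p \<noteq> hi r" using h_hi assms by metis
  then have "g (hi p) / f (hi p) \<noteq> g (hi r) / f (hi r)"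
    using uinj hi_in assms unfolding inj_on_def by blast
  moreover have "g (hi p) / f (hi p) = g (hi r) / f (hi r)"
    using a FFpos[OF assms(1)] FFpos[OF assms(2)] by (simp add: FF_def GG_def field_simps)
  ultimately show False by simp
qed

lemma prog_J:
  assumes "p0 \<in> J" "p0 + real N * s \<in> J" "s > 0"
  shows "\<exists>\<alpha> \<beta> \<gamma>. \<forall>j\<le>N. \<alpha> * (FF (p0 + real j * s))^2 + \<beta> * FF (p0 + real j * s) * GG (p0 + real j * s)
      + \<gamma> * (GG (p0 + real j * s))^2 = 1"
proof -
  define Fs where "Fs i = FF (p0 + real i * s)" for i
  define Gs where "Gs i = GG (p0 + real i * s)" for i
  have inJ: "p0 + x * s \<in> J" if "0 \<le> x" "x \<le> real N" for x
  proof (rule J_between[OF assms(1,2)])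
    show "p0 \<le> p0 + x * s" using that assms(3) by simp
    show "p0 + x * s \<le> p0 + real N * s" using that assms(3) by (simp add: mult_right_mono)
  qed
  have inJn: "p0 + real i * s \<in> J" if "i \<le> N" for i using inJ that by simp
  have "\<exists>\<alpha> \<beta> \<gamma>. \<forall>j\<le>N. \<alpha> * (Fs j)^2 + \<beta> * Fs j * Gs j + \<gamma> * (Gs j)^2 = 1"
  proof (rule prog_form)
    show "Fs i > 0" if "i \<le> N" for i unfolding Fs_def using FFpos inJn that by blast
    show "Fs i * Gs (Suc i) - Gs i * Fs (Suc i) \<noteq> 0" if "i < N" for i
      unfolding Fs_def Gs_def using Dnz[OF inJn[of i] inJn[of "Suc i"]] that assms(3) by simp
    show "Gs (i+1) * (Fs i + Fs (i+2)) = Fs (i+1) * (Gs i + Gs (i+2))" if "i + 2 \<le> N" for i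
    proof -
      have e: "(p0 + real i * s + (p0 + real (i+2) * s))/2 = p0 + real (i+1) * s"
        by (simp add: field_simps)
      show ?thesis using keyJ[OF inJn[of i] inJn[of "i+2"]] that unfolding e Fs_def Gs_def by simp
    qed
    show "(Fs i + Fs (i+3)) * (Gs (i+1) + Gs (i+2)) = (Gs i + Gs (i+3)) * (Fs (i+1) + Fs (i+2))"
      if "i + 3 \<le> N" for i
    proof -
      define c where "c = p0 + (real i + 3/2) * s"
      have e1: "(p0 + real i * s + (p0 + real (i+3) * s))/2 = c" by (simp add: c_def field_simps)
      have e2: "(p0 + real (i+1) * s + (p0 + real (i+2) * s))/2 = c" by (simp add: c_def field_simps)
      have k1: "c \<in> J" "GG c * (Fs i + Fs (i+3)) = FF c * (Gs i + Gs (i+3))"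
        using keyJ[OF inJn[of i] inJn[of "i+3"]] that unfolding e1 Fs_def Gs_def by simp_all
      have k2: "GG c * (Fs (i+1) + Fs (i+2)) = FF c * (Gs (i+1) + Gs (i+2))"
        using keyJ[OF inJn[of "i+1"] inJn[of "i+2"]] that unfolding e2 Fs_def Gs_def by simp
      have Fc: "FF c > 0" using FFpos k1(1) by simp
      have "FF c * ((Fs i + Fs (i+3)) * (Gs (i+1) + Gs (i+2))) = FF c * ((Gs i + Gs (i+3)) * (Fs (i+1) + Fs (i+2)))"
      proof -
        have "FF c * ((Fs i + Fs (i+3)) * (Gs (i+1) + Gs (i+2)))
            = (Fs i + Fs (i+3)) * (FF c * (Gs (i+1) + Gs (i+2)))" by (simp add: algebra_simps)
        also have "\<dots> = (Fs i + Fs (i+3)) * (GG c * (Fs (i+1) + Fs (i+2)))" using k2 by simp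
        also have "\<dots> = (GG c * (Fs i + Fs (i+3))) * (Fs (i+1) + Fs (i+2))" by (simp add: algebra_simps)
        also have "\<dots> = (FF c * (Gs i + Gs (i+3))) * (Fs (i+1) + Fs (i+2))" using k1 by simp
        finally show ?thesis by (simp add: algebra_simps)
      qed
      then show ?thesis using Fc by simp
    qed
  qed
  then show ?thesis unfolding Fs_def Gs_def .
qed

end

lemma ratio_ne:
  fixes a b c d :: real
  assumes "a > 0" "c > 0" "a * d - b * c \<noteq> 0"
  shows "b / a \<noteq> d / c"
proof
  assume "b / a = d / c"
  then have "b * c = d * a" using assms(1,2) by (simp add: field_simps)
  then show False using assms(3) by (simp add: algebra_simps)
qed

context partB begin

lemma two_points: "\<exists>x1\<in>I. \<exists>x2\<in>I. h x1 < h x2"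
proof -
  obtain x where x: "x \<in> I" using Ine by blast
  obtain d where d: "d > 0" "ball x d \<subseteq> I" using Iopen x open_contains_ball by blast
  have "x + d/2 \<in> ball x d" using d(1) by (simp add: dist_real_def)
  then have x2: "x + d/2 \<in> I" using d(2) by blast
  have "x \<noteq> x + d/2" using d(1) by simp
  then have "h x \<noteq> h (x + d/2)" using hinj x x2 unfolding inj_on_def by blast
  then show ?thesis using x x2 by (cases "h x < h (x + d/2)") force+
qed

definition QF where "QF a b c p = a * (FF p)^2 + b * FF p * GG p + c * (GG p)^2"

lemma dyadic_main:
  assumes a: "a \<in> J" and e: "e > 0" and a2: "a + 2*e \<in> J"
    and ref: "\<And>i. i \<le> (2::nat) \<Longrightarrow> QF \<alpha> \<beta> \<gamma> (a + real i * e) = 1"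
    and p0: "a - real j * (e/2^n) \<in> J" and pN: "a - real j * (e/2^n) + real N * (e/2^n) \<in> J"
    and jN: "j + 2^(n+1) \<le> N" and iN: "i \<le> N"
  shows "QF \<alpha> \<beta> \<gamma> (a - real j * (e/2^n) + real i * (e/2^n)) = 1"
proof -
  define s where "s = e/2^n"
  define p0 where "p0 = a - real j * s"
  have s: "s > 0" using e by (simp add: s_def)
  obtain \<alpha>' \<beta>' \<gamma>' where Q': "\<And>k. k \<le> N \<Longrightarrow> \<alpha>' * (FF (p0 + real k * s))^2 + \<beta>' * FF (p0 + real k * s) * GG (p0 + real k * s)
      + \<gamma>' * (GG (p0 + real k * s))^2 = 1"
    using prog_J[of p0 N s] p0 pN s unfolding p0_def s_def by blast
  define idx where "idx i = j + i * 2^n" for i :: nat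
  have pidx: "p0 + real (idx i) * s = a + real i * e" for i
  proof -
    have "real (idx i) * s = real j * s + real i * (2^n * s)" by (simp add: idx_def algebra_simps)
    also have "2^n * s = e" by (simp add: s_def)
    finally show ?thesis by (simp add: p0_def)
  qed
  have idxN: "idx i \<le> N" if "i < 3" for i
  proof -
    have "i * 2^n \<le> 2 * 2^n" using that by simp
    moreover have "2^(n+1) = 2 * (2::nat)^n" by simp
    ultimately show ?thesis using jN unfolding idx_def by linarith
  qed
  have inJ: "a + real i * e \<in> J" if "i < 3" for i :: nat
    by (rule J_between[OF a a2]) (use that e in auto)
  have "\<alpha>' = \<alpha> \<and> \<beta>' = \<beta> \<and> \<gamma>' = \<gamma>"
  proof (rule quad_unique_pt[where F="\<lambda>i. FF (a + real i * e)" and G="\<lambda>i. GG (a + real i * e)"])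
    show "FF (a + real i * e) > 0" if "i < 3" for i using FFpos inJ that by blast
    show "GG (a + real i * e) / FF (a + real i * e) \<noteq> GG (a + real k * e) / FF (a + real k * e)"
      if "i < 3" "k < 3" "i \<noteq> k" for i k
    proof -
      have "a + real i * e \<noteq> a + real k * e" using that e by simp
      then have "FF (a + real i * e) * GG (a + real k * e) - GG (a + real i * e) * FF (a + real k * e) \<noteq> 0"
        using Dnz inJ that by blast
      then show ?thesis using ratio_ne FFpos inJ that by blast
    qed
    show "\<alpha>' * (FF (a + real i * e))^2 + \<beta>' * FF (a + real i * e) * GG (a + real i * e) + \<gamma>' * (GG (a + real i * e))^2 = 1"
      if "i < 3" for i using Q'[OF idxN[OF that]] unfolding pidx .
    show "\<alpha> * (FF (a + real i * e))^2 + \<beta> * FF (a + real i * e) * GG (a + real i * e) + \<gamma> * (GG (a + real i * e))^2 = 1"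
      if "i < 3" for i using ref[of i] that unfolding QF_def by simp
  qed
  then show ?thesis using Q'[OF iN] unfolding QF_def p0_def s_def by simp
qed

lemma dyadic:
  assumes a: "a \<in> J" and e: "e > 0" and a2: "a + 2*e \<in> J"
    and ref: "\<And>i. i \<le> (2::nat) \<Longrightarrow> QF \<alpha> \<beta> \<gamma> (a + real i * e) = 1"
    and t: "a + real_of_int k * (e/2^n) \<in> J"
  shows "QF \<alpha> \<beta> \<gamma> (a + real_of_int k * (e/2^n)) = 1"
proof (cases "k \<ge> 0")
  case True
  define N where "N = max (nat k) (2^(n+1))"
  have "a + real N * (e/2^n) \<in> J"
  proof (cases "nat k \<le> 2^(n+1)")
    case True
    then have "N = 2^(n+1)" by (simp add: N_def)
    then have "a + real N * (e/2^n) = a + 2*e" by simp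
    then show ?thesis using a2 by simp
  next
    case False
    then have "N = nat k" by (simp add: N_def)
    then have "real N = real_of_int k" using \<open>k \<ge> 0\<close> by simp
    then show ?thesis using t by simp
  qed
  then have "QF \<alpha> \<beta> \<gamma> (a - real 0 * (e/2^n) + real (nat k) * (e/2^n)) = 1"
    by (intro dyadic_main[OF a e a2 ref]) (use a in \<open>auto simp: N_def\<close>)
  then show ?thesis using True by simp
next
  case False
  define j where "j = nat (-k)"
  define N where "N = j + 2^(n+1)"
  have rj: "real j = - real_of_int k" using False by (simp add: j_def)
  have p0: "a - real j * (e/2^n) = a + real_of_int k * (e/2^n)" using rj by simp
  have pN: "a - real j * (e/2^n) + real N * (e/2^n) = a + 2 * e" by (simp add: N_def algebra_simps)
  have Q0: "QF \<alpha> \<beta> \<gamma> (a - real j * (e/2^n) + real 0 * (e/2^n)) = 1"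
  proof (rule dyadic_main[OF a e a2 ref])
    show "a - real j * (e/2^n) \<in> J" unfolding p0 by (rule t)
    show "a - real j * (e/2^n) + real N * (e/2^n) \<in> J" unfolding pN by (rule a2)
  qed (auto simp: N_def)
  have eq0: "a - real j * (e/2^n) + real (0::nat) * (e/2^n) = a + real_of_int k * (e/2^n)" using p0 by simp
  show ?thesis using Q0 unfolding eq0 .
qed

end

context partB begin

lemma h_isCont: "x \<in> I \<Longrightarrow> isCont h x"
  using continuous_on_eq_continuous_at[OF Iopen] hcont by blast

lemma u_isCont: "x \<in> I \<Longrightarrow> isCont (\<lambda>t. g t / f t) x"
  using continuous_on_eq_continuous_at[OF Iopen] ucont by blast

lemma hi_cont:
  assumes "x \<in> I" shows "isCont hi (h x)"
proof -
  obtain d where d: "d > 0" "cball x d \<subseteq> I" using Iopen assms open_contains_cball by blast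
  have zin: "z \<in> I" if "\<bar>z - x\<bar> \<le> d" for z
    using that d(2) by (auto simp: dist_real_def subset_iff)
  show ?thesis
    by (rule isCont_inverse_function[OF d(1)]) (use zin hi_h h_isCont in auto)
qed

lemma f_isCont:
  assumes yI: "y \<in> I" shows "isCont f y"
proof -
  let ?u = "\<lambda>t. g t / f t"
  obtain d where d: "d > 0" "ball y d \<subseteq> I" using Iopen yI open_contains_ball by blast
  define p where "p = y + d/2"
  have "p \<in> ball y d" using d(1) by (simp add: p_def dist_real_def)
  then have pI: "p \<in> I" using d(2) by blast
  have py: "p \<noteq> y" using d(1) by (simp add: p_def)
  define mr where "mr r = hi ((h p + h r)/2)" for r
  define R where "R r = f p * (?u (mr r) - ?u p) / (?u r - ?u (mr r))" for r
  have props: "mr r \<in> I \<and> h (mr r) = (h p + h r)/2 \<and> ?u r \<noteq> ?u (mr r) \<and> f r = R r"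
    if rI: "r \<in> I" and rp: "r \<noteq> p" for r
  proof -
    obtain z where z: "z \<in> I" "?u z = (g p + g r) / (f p + f r)" "h z = (h p + h r)/2"
      using key[OF pI rI] by blast
    have "(h p + h r)/2 = h z" using z(3) by simp
    then have mz: "mr r = z" unfolding mr_def using hi_h[OF z(1)] by simp
    have "h p \<noteq> h r" using hinj pI rI rp unfolding inj_on_def by blast
    then have "h z \<noteq> h r" using z(3) by simp
    then have "z \<noteq> r" by blast
    then have une: "?u r \<noteq> ?u z" using uinj z(1) rI unfolding inj_on_def by blast
    have fp: "f p > 0" and fr: "f r > 0" using fpos pI rI by auto
    have "?u z * (f p + f r) = (g p + g r) / (f p + f r) * (f p + f r)" using z(2) by simp
    also have "\<dots> = g p + g r" using fp fr by simp
    finally have e1: "?u z * (f p + f r) = g p + g r" .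
    have fp0: "f p \<noteq> 0" and fr0: "f r \<noteq> 0" using fp fr by auto
    have e2: "g p + g r = ?u p * f p + ?u r * f r" using fp0 fr0 by simp
    have "f r * (?u r - ?u z) = (?u p * f p + ?u r * f r) - ?u z * (f p + f r) + f p * (?u z - ?u p)"
      by (simp add: algebra_simps add_divide_distrib)
    also have "\<dots> = f p * (?u z - ?u p)" using e1 e2 by simp
    finally have "f r * (?u r - ?u z) = f p * (?u z - ?u p)" .
    then have "f r = f p * (?u z - ?u p) / (?u r - ?u z)" using une by (simp add: field_simps)
    then show ?thesis using mz z une by (simp add: R_def)
  qed
  have my: "mr y \<in> I" "h (mr y) = (h p + h y)/2" "?u y \<noteq> ?u (mr y)" using props[OF yI py[symmetric]] by auto
  have c1: "isCont (\<lambda>r. (h p + h r)/2) y" using h_isCont[OF yI] by (intro continuous_intros) auto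
  have c2: "isCont hi ((h p + h y)/2)" using hi_cont[OF my(1)] my(2) by simp
  have cm: "isCont mr y" unfolding mr_def using isCont_o2[OF c1 c2] .
  have cum: "isCont (\<lambda>r. ?u (mr r)) y" using isCont_o2[OF cm u_isCont[OF my(1)]] .
  define U where "U = (\<lambda>t. g t / f t)"
  have cum': "isCont (\<lambda>r. U (mr r)) y" using cum by (simp add: U_def)
  have cu': "isCont U y" using u_isCont[OF yI] by (simp add: U_def)
  have ne': "U y - U (mr y) \<noteq> 0" using my(3) by (simp add: U_def)
  have cR': "isCont (\<lambda>r. f p * (U (mr r) - U p) / (U r - U (mr r))) y"
    using cum' cu' ne' by (intro continuous_intros) auto
  have Req: "R = (\<lambda>r. f p * (U (mr r) - U p) / (U r - U (mr r)))"
    by (rule ext) (simp add: R_def U_def)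
  have cR: "isCont R y" using cR' Req by simp
  have ev: "eventually (\<lambda>r. r \<in> I - {p}) (nhds y)"
    by (rule eventually_nhds_in_open) (use Iopen py yI in auto)
  have "eventually (\<lambda>r. f r = R r) (nhds y)"
    using ev by (rule eventually_mono) (use props in auto)
  then show ?thesis using cR isCont_cong by blast
qed

lemma g_isCont:
  assumes yI: "y \<in> I" shows "isCont g y"
proof -
  have c: "isCont (\<lambda>t. g t / f t * f t) y" by (rule isCont_mult[OF u_isCont[OF yI] f_isCont[OF yI]])
  have ev: "eventually (\<lambda>t. g t / f t * f t = g t) (nhds y)"
    using eventually_nhds_in_open[OF Iopen yI] by (rule eventually_mono) (use fpos in force)
  show ?thesis using isCont_cong[OF ev] c by simp
qed

theorem conic:
  shows "\<exists>\<alpha> \<beta> \<gamma>. \<forall>x\<in>I. \<alpha> * (f x)^2 + \<beta> * f x * g x + \<gamma> * (g x)^2 = 1"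
proof -
  obtain x1 x2 where x12: "x1 \<in> I" "x2 \<in> I" "h x1 < h x2" using two_points by blast
  define a where "a = h x1"
  define e where "e = (h x2 - h x1)/2"
  have e: "e > 0" using x12 by (simp add: e_def)
  have aJ: "a \<in> J" using x12 by (simp add: a_def J_def)
  have "a + 2*e = h x2" unfolding a_def e_def by (simp add: field_simps)
  then have a2J: "a + 2*e \<in> J" using x12 by (simp add: J_def)
  obtain \<alpha> \<beta> \<gamma> where ref0: "\<And>j. j \<le> 2 \<Longrightarrow> \<alpha> * (FF (a + real j * e))^2 + \<beta> * FF (a + real j * e) * GG (a + real j * e)
      + \<gamma> * (GG (a + real j * e))^2 = 1"
    using prog_J[of a 2 e] aJ a2J e by auto
  have ref: "QF \<alpha> \<beta> \<gamma> (a + real i * e) = 1" if "i \<le> 2" for i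
    using ref0[OF that] unfolding QF_def .
  define Qx where "Qx x = \<alpha> * (f x)^2 + \<beta> * f x * g x + \<gamma> * (g x)^2" for x
  have QxQF: "Qx y = QF \<alpha> \<beta> \<gamma> (h y)" if "y \<in> I" for y
    using hi_h[OF that] by (simp add: Qx_def QF_def FF_def GG_def)
  have "Qx q = 1" if qI: "q \<in> I" for q
  proof (rule ccontr)
    assume ne: "Qx q \<noteq> 1"
    have "isCont Qx q" unfolding Qx_def using f_isCont[OF qI] g_isCont[OF qI]
      by (intro continuous_intros)
    then obtain \<epsilon> where eps: "\<epsilon> > 0" "\<And>y. dist q y < \<epsilon> \<Longrightarrow> Qx y \<noteq> 1"
      using continuous_at_avoid ne by blast
    obtain d where d: "d > 0" "ball q d \<subseteq> I" using Iopen qI open_contains_ball by blast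
    define \<delta> where "\<delta> = min \<epsilon> d"
    have \<delta>: "\<delta> > 0" "\<delta> \<le> \<epsilon>" "\<delta> \<le> d" using eps d by (auto simp: \<delta>_def)
    define q2 where "q2 = q + \<delta>/2"
    have segI: "{q..q2} \<subseteq> I"
    proof
      fix y assume "y \<in> {q..q2}"
      then have "y \<in> ball q d" using \<delta> by (auto simp: q2_def dist_real_def)
      then show "y \<in> I" using d(2) by blast
    qed
    have q2I: "q2 \<in> I" using segI \<delta> by (auto simp: q2_def)
    have "q \<noteq> q2" using \<delta> by (simp add: q2_def)
    then have hne: "h q \<noteq> h q2" using hinj qI q2I unfolding inj_on_def by blast
    define A where "A = min (h q) (h q2)"
    define B where "B = max (h q) (h q2)"
    have AB: "A < B" using hne by (auto simp: A_def B_def)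
    obtain n where n: "(1/2::real)^n < (B - A)/e" using real_arch_pow_inv[of "(B-A)/e" "1/2"] AB e by auto
    define s where "s = e/2^n"
    have s: "s > 0" "s < B - A"
    proof -
      show "s > 0" using e by (simp add: s_def)
      have "(1/2::real)^n * e < B - A" using n e by (simp add: field_simps)
      then show "s < B - A" by (simp add: s_def power_one_over field_simps)
    qed
    define k where "k = \<lfloor>(A - a)/s\<rfloor> + 1"
    have k1: "(A - a)/s < real_of_int k" unfolding k_def by simp
    have k2: "real_of_int k \<le> (A - a)/s + 1" unfolding k_def by simp
    define t where "t = a + real_of_int k * s"
    have tA: "A < t"
    proof -
      have "A - a < real_of_int k * s" using k1 s(1) by (simp add: field_simps)
      then show ?thesis by (simp add: t_def)
    qed
    have tB: "t < B"
    proof -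
      have "real_of_int k * s \<le> A - a + s" using k2 s(1) by (simp add: field_simps)
      then show ?thesis using s(2) by (simp add: t_def)
    qed
    have "continuous_on {q..q2} h" using continuous_on_subset[OF hcont segI] .
    then obtain y where y: "y \<in> {q..q2}" "h y = t"
      using value_between_seg[of q q2 h t] tA tB \<delta> by (auto simp: A_def B_def q2_def)
    have yI: "y \<in> I" using y segI by blast
    have tJ: "t \<in> J" using y yI by (auto simp: J_def)
    have "QF \<alpha> \<beta> \<gamma> (a + real_of_int k * (e/2^n)) = 1"
      by (rule dyadic[OF aJ e a2J ref]) (use tJ in \<open>simp_all add: t_def s_def\<close>)
    then have "Qx y = 1" using QxQF[OF yI] y by (simp add: t_def s_def)
    moreover have "dist q y < \<epsilon>" using y \<delta> by (auto simp: q2_def dist_real_def)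
    ultimately show False using eps(2) by blast
  qed
  then show ?thesis unfolding Qx_def by blast
qed

end

lemma alg_A:
  fixes \<alpha> \<beta> \<gamma> s t a b :: real
  assumes a: "a > 0" and b: "b > 0" and qs: "a^2 = \<alpha> + \<beta> * s + \<gamma> * s^2" and qt: "b^2 = \<alpha> + \<beta> * t + \<gamma> * t^2"
    and qm: "\<alpha> + \<beta> * ((s*b + t*a)/(b+a)) + \<gamma> * ((s*b + t*a)/(b+a))^2 > 0"
  shows "(1 / (\<alpha> + \<beta> * ((s*b + t*a)/(b+a)) + \<gamma> * ((s*b + t*a)/(b+a))^2)) *
      (((s * ((\<beta> + 2*\<gamma> * t)/(2*b)) + a) * (b + a) - (s*b + t*a) * ((\<beta> + 2*\<gamma> * t)/(2*b))) / ((b+a)*(b+a)))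
      - (1 / (\<alpha> + \<beta> * t + \<gamma> * t^2)) / 2 = 0"
proof -
  define m where "m = (s*b + t*a)/(b+a)"
  define b' where "b' = (\<beta> + 2*\<gamma> * t)/(2*b)"
  define qm where "qm = \<alpha> + \<beta> * m + \<gamma> * m^2"
  define K where "K = 2*\<alpha> + \<beta> * (s+t) + 2*\<gamma> * s*t"
  have ab: "b + a > 0" using a b by simp
  have N: "(s * b' + a) * (b + a) - (s*b + t*a) * b' = a * (b + a + (s-t)*b')"
    by (simp add: algebra_simps)
  have R1: "qm * (b+a)^2 = b^2 * (\<alpha> + \<beta> * s + \<gamma> * s^2) + a^2 * (\<alpha> + \<beta> * t + \<gamma> * t^2) + a*b*K"
  proof -
    have mD: "m * (b+a) = s*b + t*a" using ab by (simp add: m_def)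
    have "qm * (b+a)^2 = \<alpha> * (b+a)^2 + \<beta> * (m * (b+a))*(b+a) + \<gamma> * (m * (b+a))^2"
      by (simp add: qm_def power2_eq_square algebra_simps)
    also have "\<dots> = \<alpha> * (b+a)^2 + \<beta> * (s*b+t*a)*(b+a) + \<gamma> * (s*b+t*a)^2"
      unfolding mD ..
    also have "\<dots> = b^2 * (\<alpha> + \<beta> * s + \<gamma> * s^2) + a^2 * (\<alpha> + \<beta> * t + \<gamma> * t^2) + a*b*K"
      by (simp add: K_def power2_eq_square algebra_simps)
    finally show ?thesis .
  qed
  have R2: "qm * (b+a)^2 = 2 * a^2 * b^2 + a*b*K" using R1 qs qt by (simp add: power2_eq_square)
  have L1: "2 * b^2 * (a * (b + a + (s-t)*b')) = 2*a*b*b^2 + 2*a^2*b^2 + a*b*(s-t)*(\<beta> + 2*\<gamma> * t)"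
    using b by (simp add: b'_def field_simps power2_eq_square)
  have L2: "2*a*b*b^2 + a*b*(s-t)*(\<beta> + 2*\<gamma> * t) = a*b*K"
    unfolding qt by (simp add: K_def algebra_simps power2_eq_square)
  have key: "2 * b^2 * (a * (b + a + (s-t)*b')) = qm * (b+a)^2"
    using L1 L2 R2 by simp
  have qtpos: "\<alpha> + \<beta> * t + \<gamma> * t^2 > 0" using qt b by (metis zero_less_power)
  have qmpos: "qm > 0" using qm by (simp add: qm_def m_def)
  have ab0: "(b+a)*(b+a) \<noteq> 0" using ab by simp
  have b0: "2 * b^2 \<noteq> 0" using b by simp
  have "a * (b + a + (s-t)*b') / ((b+a)*(b+a)) = qm / (2 * b^2)"
    using key ab0 b0 by (simp add: divide_eq_eq eq_divide_eq power2_eq_square mult.commute mult.left_commute)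
  then have "(1/qm) * (a * (b + a + (s-t)*b') / ((b+a)*(b+a))) = 1 / (2 * b^2)"
    using qmpos by simp
  then show ?thesis
    unfolding N[folded b'_def, symmetric] using qt
    by (simp add: qm_def m_def b'_def)
qed

lemma smo_open_image:
  fixes \<phi> :: "real \<Rightarrow> real"
  assumes "open I" "is_interval I" "continuous_on I \<phi>" "strictly_monotone_on I \<phi>"
  shows "open (\<phi> ` I)"
  unfolding open_contains_ball
proof
  fix s assume "s \<in> \<phi> ` I"
  then obtain x where x: "x \<in> I" "s = \<phi> x" by blast
  obtain d where d: "d > 0" "ball x d \<subseteq> I" using assms(1) x(1) open_contains_ball by blast
  have "x - d/2 \<in> ball x d" "x + d/2 \<in> ball x d" using d(1) by (simp_all add: dist_real_def)
  then have x1: "x - d/2 \<in> I" and x2: "x + d/2 \<in> I" using d(2) by blast+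
  define m1 where "m1 = min (\<phi> (x - d/2)) (\<phi> (x + d/2))"
  define m2 where "m2 = max (\<phi> (x - d/2)) (\<phi> (x + d/2))"
  have lt: "x - d/2 < x" "x < x + d/2" using d(1) by simp_all
  have m12: "m1 < s \<and> s < m2"
    using smo_cases[OF assms(4)]
  proof
    assume A: "\<forall>x\<in>I. \<forall>y\<in>I. x < y \<longrightarrow> \<phi> x < \<phi> y"
    have "\<phi> (x - d/2) < \<phi> x" "\<phi> x < \<phi> (x + d/2)" using A x1 x2 x(1) lt by blast+
    then show ?thesis using x(2) by (simp add: m1_def m2_def)
  next
    assume A: "\<forall>x\<in>I. \<forall>y\<in>I. x < y \<longrightarrow> \<phi> y < \<phi> x"
    have "\<phi> x < \<phi> (x - d/2)" "\<phi> (x + d/2) < \<phi> x" using A x1 x2 x(1) lt by blast+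
    then show ?thesis using x(2) by (simp add: m1_def m2_def)
  qed
  have m1I: "m1 \<in> \<phi> ` I" and m2I: "m2 \<in> \<phi> ` I" using x1 x2
    by (auto simp: m1_def m2_def min_def max_def)
  have ii: "is_interval (\<phi> ` I)" by (rule image_interval[OF assms(3,2)])
  define \<epsilon> where "\<epsilon> = min (s - m1) (m2 - s)"
  have "\<epsilon> > 0" using m12 by (simp add: \<epsilon>_def)
  moreover have "ball s \<epsilon> \<subseteq> \<phi> ` I"
  proof
    fix t assume "t \<in> ball s \<epsilon>"
    then have "m1 \<le> t" "t \<le> m2" by (auto simp: \<epsilon>_def dist_real_def)
    then show "t \<in> \<phi> ` I" using interval_between[OF ii m1I m2I] by blast
  qed
  ultimately show "\<exists>\<epsilon>>0. ball s \<epsilon> \<subseteq> \<phi> ` I" by blast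
qed

lemma frac_lemma:
  fixes A B p r :: real
  assumes "A > 0" "B > 0"
  shows "(p / A + r / B) / (1 / A + 1 / B) = (p * B + r * A) / (B + A)"
proof -
  have e1: "p / A + r / B = (p * B + r * A) / (A * B)" using assms by (simp add: field_simps)
  have e2: "1 / A + 1 / B = (B + A) / (A * B)" using assms by (simp add: field_simps)
  have "A * B \<noteq> 0" using assms by simp
  then show ?thesis unfolding e1 e2 by simp
qed

locale partA =
  fixes I :: "real set" and f g :: "real \<Rightarrow> real" and \<alpha> \<beta> \<gamma> :: real
  assumes Iopen: "open I" and Iint: "is_interval I" and Ine: "I \<noteq> {}"
    and fpos: "\<And>x. x \<in> I \<Longrightarrow> f x > 0"
    and ucont: "continuous_on I (\<lambda>t. g t / f t)" and usmo: "strictly_monotone_on I (\<lambda>t. g t / f t)"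
    and conic: "\<And>x. x \<in> I \<Longrightarrow> \<alpha> * (f x)^2 + \<beta> * f x * g x + \<gamma> * (g x)^2 = 1"
begin

definition uu where "uu x = g x / f x"
definition q where "q s = \<alpha> + \<beta> * s + \<gamma> * s^2"
definition U where "U = uu ` I"
definition sg where "sg s = sqrt (q s)"
definition H where "H = (SOME H. \<forall>s\<in>U. (H has_real_derivative 1 / q s) (at s))"
definition mm where "mm s t = (s * sg t + t * sg s) / (sg t + sg s)"

lemma uu_eq: "uu = (\<lambda>t. g t / f t)" by (rule ext) (simp add: uu_def)

lemma uinj: "inj_on uu I" using smo_inj[OF usmo] uu_eq by simp

lemma q_u: assumes "x \<in> I" shows "q (uu x) * (f x)^2 = 1"
proof -
  have f0: "f x \<noteq> 0" using fpos[OF assms] by simp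
  have g: "g x = uu x * f x" using f0 by (simp add: uu_def)
  have "q (uu x) * (f x)^2 = \<alpha> * (f x)^2 + \<beta> * f x * g x + \<gamma> * (g x)^2"
    unfolding g q_def by (simp add: power2_eq_square algebra_simps)
  then show ?thesis using conic[OF assms] by simp
qed

lemma qpos: assumes "s \<in> U" shows "q s > 0"
proof -
  obtain x where x: "x \<in> I" "s = uu x" using assms by (auto simp: U_def)
  have "q s * (f x)^2 = 1" using q_u x by simp
  moreover have "(f x)^2 > 0" using fpos[OF x(1)] by simp
  ultimately show ?thesis by (metis zero_less_mult_pos2 zero_less_one)
qed

lemma sgpos: "s \<in> U \<Longrightarrow> sg s > 0" using qpos by (simp add: sg_def)

lemma f_eq: assumes "x \<in> I" shows "f x = 1 / sg (uu x)"
proof -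
  have fx: "f x > 0" using fpos assms by simp
  have "q (uu x) = 1 / (f x)^2" using q_u[OF assms] fx by (simp add: field_simps)
  then have "sg (uu x) = 1 / f x" using fx by (simp add: sg_def real_sqrt_divide)
  then show ?thesis using fx by simp
qed

lemma g_eq: assumes "x \<in> I" shows "g x = uu x / sg (uu x)"
proof -
  have "f x \<noteq> 0" using fpos[OF assms] by simp
  then have "g x = uu x * f x" by (simp add: uu_def)
  then show ?thesis using f_eq[OF assms] by simp
qed

lemma U_int: "is_interval U"
  unfolding U_def uu_eq by (rule image_interval[OF ucont Iint])

lemma U_open: "open U"
  unfolding U_def uu_eq by (rule smo_open_image[OF Iopen Iint ucont usmo])

lemma U_ne: "U \<noteq> {}" using Ine by (simp add: U_def)

lemma H_deriv: assumes "s \<in> U" shows "(H has_real_derivative 1 / q s) (at s)"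
proof -
  obtain c where c: "c \<in> U" using U_ne by blast
  have qne: "\<And>s. s \<in> U \<Longrightarrow> \<alpha> + \<beta> * s + \<gamma> * s^2 \<noteq> 0"
    using qpos unfolding q_def by (metis less_irrefl)
  have "continuous_on U (\<lambda>s. 1 / q s)"
    using qne by (auto simp: q_def intro!: continuous_intros)
  then have "\<exists>H. \<forall>s\<in>U. (H has_real_derivative 1 / q s) (at s)"
    using antideriv_open_interval[OF U_open U_int _ c] by blast
  then have "\<forall>s\<in>U. (H has_real_derivative 1 / q s) (at s)"
    unfolding H_def by (rule someI_ex)
  then show ?thesis using assms by blast
qed

lemma H_cont: "continuous_on U H"
  using H_deriv by (intro DERIV_continuous_on[where D="\<lambda>s. 1 / q s"]) (auto intro: has_field_derivative_at_within)

lemma H_mono: assumes "s \<in> U" "t \<in> U" "s < t" shows "H s < H t"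
proof (rule DERIV_pos_imp_increasing[OF assms(3)])
  fix x assume "s \<le> x" "x \<le> t"
  then have "x \<in> U" using interval_between[OF U_int assms(1,2)] by blast
  then show "\<exists>y. DERIV H x :> y \<and> y > 0" using H_deriv qpos by force
qed

lemma mm_in: assumes "s \<in> U" "t \<in> U" shows "mm s t \<in> U"
proof -
  have e: "mm s t = (s * sg t + t * sg s) / (sg t + sg s)" by (simp add: mm_def)
  have b1: "min s t \<le> mm s t" "mm s t \<le> max s t"
    unfolding e using wavg_bounds[OF sgpos[OF assms(2)] sgpos[OF assms(1)], of s t] by auto
  have "min s t \<in> U" "max s t \<in> U" using assms by (auto simp: min_def max_def)
  then show ?thesis using interval_between[OF U_int] b1 by blast
qed

lemma mm_same: assumes "s \<in> U" shows "mm s s = s"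
  using sgpos[OF assms] by (simp add: mm_def field_simps)

lemma H_mid: assumes sU: "s \<in> U" and tU: "t \<in> U" shows "H (mm s t) = (H s + H t)/2"
proof -
  define a where "a = sg s"
  have a: "a > 0" using sgpos[OF sU] by (simp add: a_def)
  have qs: "a^2 = \<alpha> + \<beta> * s + \<gamma> * s^2" using qpos[OF sU] by (simp add: a_def sg_def q_def)
  define \<phi> where "\<phi> t = H (mm s t) - (H s + H t)/2" for t
  have d0: "(\<phi> has_real_derivative 0) (at t)" if tU: "t \<in> U" for t
  proof -
    define b where "b = sg t"
    have b: "b > 0" using sgpos[OF tU] by (simp add: b_def)
    have qt: "b^2 = \<alpha> + \<beta> * t + \<gamma> * t^2" using qpos[OF tU] by (simp add: b_def sg_def q_def)
    define b' where "b' = (\<beta> + 2 * \<gamma> * t) / (2 * b)"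
    have dq: "(q has_real_derivative \<beta> + 2 * \<gamma> * t) (at t)"
      unfolding q_def[abs_def] by (auto intro!: derivative_eq_intros)
    have dsg: "(sg has_real_derivative b') (at t)"
    proof -
      have "((\<lambda>t. sqrt (q t)) has_real_derivative inverse (sqrt (q t)) / 2 * (\<beta> + 2 * \<gamma> * t)) (at t)"
        by (rule DERIV_chain2[OF DERIV_real_sqrt[OF qpos[OF tU]] dq])
      moreover have "inverse (sqrt (q t)) / 2 * (\<beta> + 2 * \<gamma> * t) = b'"
        by (simp add: b'_def b_def sg_def field_simps)
      ultimately show ?thesis unfolding sg_def[abs_def] by simp
    qed
    have mmf: "(\<lambda>t. mm s t) = (\<lambda>t. (s * sg t + t * a) / (sg t + a))"
      by (rule ext) (simp add: mm_def a_def)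
    have dnum: "((\<lambda>t. s * sg t + t * a) has_real_derivative s * b' + a) (at t)"
      using DERIV_add[OF DERIV_cmult[OF dsg, of s] DERIV_cmult_right[OF DERIV_ident, of a]] by simp
    have dden: "((\<lambda>t. sg t + a) has_real_derivative b') (at t)"
      using DERIV_add[OF dsg DERIV_const[of a]] by simp
    have dm: "((\<lambda>t. mm s t) has_real_derivative ((s * b' + a) * (b + a) - (s * b + t * a) * b') / ((b + a) * (b + a))) (at t)"
      unfolding mmf using DERIV_divide[OF dnum dden] a b by (simp add: b_def)
    have mmt: "mm s t = (s * b + t * a) / (b + a)" by (simp add: mm_def a_def b_def)
    have mU: "mm s t \<in> U" using mm_in[OF sU tU] .
    have dHm: "((\<lambda>t. H (mm s t)) has_real_derivative
        1 / q (mm s t) * (((s * b' + a) * (b + a) - (s * b + t * a) * b') / ((b + a) * (b + a)))) (at t)"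
      by (rule DERIV_chain2[OF H_deriv[OF mU] dm])
    have dphi: "(\<phi> has_real_derivative
        1 / q (mm s t) * (((s * b' + a) * (b + a) - (s * b + t * a) * b') / ((b + a) * (b + a)))
        - (1 / q t) / 2) (at t)"
      unfolding \<phi>_def[abs_def]
      using DERIV_diff[OF dHm DERIV_cdivide[OF DERIV_add[OF DERIV_const[of "H s"] H_deriv[OF tU]], of 2]]
      by simp
    have qmpos: "\<alpha> + \<beta> * ((s*b + t*a)/(b+a)) + \<gamma> * ((s*b + t*a)/(b+a))^2 > 0"
      using qpos[OF mU] by (simp add: mmt q_def)
    have "1 / q (mm s t) * (((s * b' + a) * (b + a) - (s * b + t * a) * b') / ((b + a) * (b + a)))
        - (1 / q t) / 2 = 0"
      using alg_A[OF a b qs qt qmpos] by (simp add: mmt q_def b'_def)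
    then show ?thesis using dphi by simp
  qed
  have "\<exists>c. \<forall>t\<in>U. \<phi> t = c"
    by (rule has_field_derivative_zero_constant)
       (use is_interval_convex[OF U_int] d0 has_field_derivative_at_within in blast)+
  then obtain c where c: "\<And>t. t \<in> U \<Longrightarrow> \<phi> t = c" by blast
  have "\<phi> s = 0" using mm_same[OF sU] by (simp add: \<phi>_def)
  then have "\<phi> t = 0" using c sU tU by metis
  then show ?thesis by (simp add: \<phi>_def)
qed

lemma M_eq: assumes "x \<in> I" "y \<in> I"
  shows "(g x + g y) / (f x + f y) = mm (uu x) (uu y)"
proof -
  have ux: "uu x \<in> U" "uu y \<in> U" using assms by (auto simp: U_def)
  have p: "sg (uu x) > 0" "sg (uu y) > 0" using sgpos ux by auto
  show ?thesis unfolding f_eq[OF assms(1)] f_eq[OF assms(2)] g_eq[OF assms(1)] g_eq[OF assms(2)] mm_def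
    using frac_lemma[OF p] .
qed

lemma z_ex: assumes "x \<in> I" "y \<in> I"
  shows "\<exists>z\<in>I. g z / f z = (g x + g y) / (f x + f y) \<and> H (uu z) = (H (uu x) + H (uu y))/2"
proof -
  have ux: "uu x \<in> U" "uu y \<in> U" using assms by (auto simp: U_def)
  have "mm (uu x) (uu y) \<in> U" using mm_in[OF ux] .
  then obtain z where z: "z \<in> I" "uu z = mm (uu x) (uu y)" by (auto simp: U_def)
  show ?thesis
    using z M_eq[OF assms] H_mid[OF ux] by (intro bexI[OF _ z(1)]) (simp add: uu_def)
qed

lemma HU_inj: "inj_on (\<lambda>x. H (uu x)) I"
proof (rule inj_onI)
  fix x y assume xy: "x \<in> I" "y \<in> I" "H (uu x) = H (uu y)"
  have u: "uu x \<in> U" "uu y \<in> U" using xy by (auto simp: U_def)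
  have "uu x = uu y"
  proof (rule ccontr)
    assume "uu x \<noteq> uu y"
    then consider "uu x < uu y" | "uu y < uu x" by linarith
    then show False using H_mono u xy(3) by cases force+
  qed
  then show "x = y" using uinj xy unfolding inj_on_def by blast
qed

theorem S1_of_S2: "\<exists>h. continuous_on I h \<and> strictly_monotone_on I h \<and> eq_star I f g h"
proof (intro exI conjI)
  let ?h = "\<lambda>x. H (uu x)"
  show "continuous_on I ?h"
  proof -
    have "continuous_on I uu" using ucont uu_eq by simp
    moreover have "uu ` I \<subseteq> U" by (simp add: U_def)
    ultimately show ?thesis using continuous_on_compose2[OF H_cont] by blast
  qed
  have "strict_mono_on I ?h \<or> strict_antimono_on I ?h"
    using smo_cases[OF usmo]
  proof (elim disjE)
    assume A: "\<forall>x\<in>I. \<forall>y\<in>I. x < y \<longrightarrow> g x / f x < g y / f y"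
    have "strict_mono_on I ?h"
    proof (rule strict_mono_onI)
      fix r s assume "r \<in> I" "s \<in> I" "r < s"
      then show "H (uu r) < H (uu s)" using A H_mono by (auto simp: uu_def U_def)
    qed
    then show ?thesis by simp
  next
    assume A: "\<forall>x\<in>I. \<forall>y\<in>I. x < y \<longrightarrow> g y / f y < g x / f x"
    have "strict_antimono_on I ?h"
      unfolding monotone_on_def
    proof (intro ballI impI)
      fix r s assume "r \<in> I" "s \<in> I" "r < s"
      then show "H (uu s) < H (uu r)" using A H_mono by (auto simp: uu_def U_def)
    qed
    then show ?thesis by simp
  qed
  then show "strictly_monotone_on I ?h" by (simp add: strictly_monotone_on_def)
  show "eq_star I f g ?h"
    by (rule eq_starI[OF _ HU_inj]) (use uinj uu_eq z_ex in auto)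
qed

end

lemma nderiv0[simp]: "nderiv 0 f = f" by (simp add: nderiv_def)
lemma nderiv1[simp]: "nderiv 1 f = deriv f" by (simp add: nderiv_def)
lemma nderiv_Suc0[simp]: "nderiv (Suc 0) f = deriv f" by (simp add: nderiv_def)
lemma nderiv2[simp]: "nderiv 2 f = deriv (deriv f)" by (simp add: nderiv_def numeral_2_eq_2)

lemma W10_eq: "W 1 0 f g x = deriv f x * g x - f x * deriv g x" by (simp add: W_def)
lemma W20_eq: "W 2 0 f g x = deriv (deriv f) x * g x - f x * deriv (deriv g) x" by (simp add: W_def)
lemma W21_eq: "W 2 1 f g x = deriv (deriv f) x * deriv g x - deriv f x * deriv (deriv g) x" by (simp add: W_def)

context partA begin

theorem S3_of_S2:
  assumes fd: "\<And>x. x \<in> I \<Longrightarrow> f differentiable (at x)"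
    and gd: "\<And>x. x \<in> I \<Longrightarrow> g differentiable (at x)"
  shows "\<forall>h. (\<forall>x\<in>I. (h has_real_derivative W 1 0 f g x) (at x)) \<longrightarrow> eq_star I f g h"
proof (intro allI impI)
  fix h assume hd: "\<forall>x\<in>I. (h has_real_derivative W 1 0 f g x) (at x)"
  have d0: "((\<lambda>x. h x + H (uu x)) has_real_derivative 0) (at x)" if xI: "x \<in> I" for x
  proof -
    have df: "(f has_real_derivative deriv f x) (at x)" using fd[OF xI] DERIV_deriv_iff_real_differentiable by blast
    have dg: "(g has_real_derivative deriv g x) (at x)" using gd[OF xI] DERIV_deriv_iff_real_differentiable by blast
    have fx: "f x > 0" using fpos[OF xI] .
    have du: "(uu has_real_derivative (deriv g x * f x - g x * deriv f x) / (f x * f x)) (at x)"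
      unfolding uu_eq using DERIV_divide[OF dg df] fx by simp
    have ux: "uu x \<in> U" using xI by (simp add: U_def)
    have dHu: "((\<lambda>x. H (uu x)) has_real_derivative 1 / q (uu x) * ((deriv g x * f x - g x * deriv f x) / (f x * f x))) (at x)"
      by (rule DERIV_chain2[OF H_deriv[OF ux] du])
    have dsum: "((\<lambda>x. h x + H (uu x)) has_real_derivative
        W 1 0 f g x + 1 / q (uu x) * ((deriv g x * f x - g x * deriv f x) / (f x * f x))) (at x)"
      by (rule DERIV_add[OF hd[rule_format, OF xI] dHu])
    have qne: "q (uu x) \<noteq> 0" using q_u[OF xI] by auto
    have qf: "1 / q (uu x) = f x * f x" using q_u[OF xI] qne by (simp add: field_simps power2_eq_square)
    have "W 1 0 f g x + 1 / q (uu x) * ((deriv g x * f x - g x * deriv f x) / (f x * f x)) = 0"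
      unfolding qf W10_eq using fx by (simp add: field_simps)
    then show ?thesis using dsum by simp
  qed
  have "\<exists>c. \<forall>x\<in>I. h x + H (uu x) = c"
    by (rule has_field_derivative_zero_constant)
       (use is_interval_convex[OF Iint] d0 has_field_derivative_at_within in blast)+
  then obtain c where c: "\<And>x. x \<in> I \<Longrightarrow> h x = c - H (uu x)" by (metis add_diff_cancel_right')
  have hinj: "inj_on h I"
  proof (rule inj_onI)
    fix x y assume "x \<in> I" "y \<in> I" "h x = h y"
    then have "H (uu x) = H (uu y)" using c by force
    then show "x = y" using HU_inj \<open>x \<in> I\<close> \<open>y \<in> I\<close> unfolding inj_on_def by blast
  qed
  show "eq_star I f g h"
  proof (rule eq_starI[OF _ hinj])
    show "inj_on (\<lambda>t. g t / f t) I" using uinj uu_eq by simp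
    fix x y assume xy: "x \<in> I" "y \<in> I"
    obtain z where z: "z \<in> I" "g z / f z = (g x + g y) / (f x + f y)" "H (uu z) = (H (uu x) + H (uu y))/2"
      using z_ex[OF xy] by blast
    have "h z = (h x + h y)/2" using c z(1,3) xy by simp
    then show "\<exists>z\<in>I. g z / f z = (g x + g y) / (f x + f y) \<and> h z = (h x + h y)/2" using z by blast
  qed
qed

end

lemma alg_S2S4:
  fixes f g f1 g1 f2 g2 \<alpha> \<beta> \<gamma> :: real
  assumes W: "f1 * g - f * g1 \<noteq> 0"
    and E0: "\<alpha> * f^2 + \<beta> * f * g + \<gamma> * g^2 = 1"
    and E1: "2 * \<alpha> * f * f1 + \<beta> * (f1 * g + f * g1) + 2 * \<gamma> * g * g1 = 0"
    and E2: "2 * \<alpha> * (f1 * f1 + f * f2) + \<beta> * (f2 * g + 2 * f1 * g1 + f * g2) + 2 * \<gamma> * (g1 * g1 + g * g2) = 0"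
  shows "f2 * g1 - f1 * g2 = (\<alpha> * \<gamma> - \<beta>^2 / 4) * (f1 * g - f * g1)^3"
proof -
  define Wv where "Wv = f1 * g - f * g1"
  define P where "P = \<alpha> * f + \<beta> / 2 * g"
  define R where "R = \<beta> / 2 * f + \<gamma> * g"
  define Bpp where "Bpp = \<alpha> * f1 * f1 + \<beta> * f1 * g1 + \<gamma> * g1 * g1"
  have e0: "P * f + R * g = 1" using E0 by (simp add: P_def R_def power2_eq_square algebra_simps)
  have e1: "P * f1 + R * g1 = 0"
  proof -
    have "2 * (P * f1 + R * g1) = 0" using E1 by (simp add: P_def R_def algebra_simps)
    then show ?thesis by simp
  qed
  have Wv0: "Wv \<noteq> 0" using W by (simp add: Wv_def)
  have P: "P = - g1 / Wv"
  proof -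
    have "P * Wv = - g1 * (P * f + R * g) + g * (P * f1 + R * g1)"
      by (simp add: Wv_def algebra_simps)
    also have "\<dots> = - g1" using e0 e1 by simp
    finally show ?thesis using Wv0 by (simp add: field_simps)
  qed
  have R: "R = f1 / Wv"
  proof -
    have "R * Wv = f1 * (P * f + R * g) - f * (P * f1 + R * g1)"
      by (simp add: Wv_def algebra_simps)
    also have "\<dots> = f1" using e0 e1 by simp
    finally show ?thesis using Wv0 by (simp add: field_simps)
  qed
  have gram: "(P * f + R * g) * Bpp - (P * f1 + R * g1)^2 = (\<alpha> * \<gamma> - \<beta>^2 / 4) * Wv^2"
    by (simp add: P_def R_def Bpp_def Wv_def power2_eq_square algebra_simps)
  then have Bpp: "Bpp = (\<alpha> * \<gamma> - \<beta>^2 / 4) * Wv^2" using e0 e1 by simp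
  have E2': "Bpp + (P * f2 + R * g2) = 0"
  proof -
    have "2 * (Bpp + (P * f2 + R * g2)) = 0" using E2 by (simp add: P_def R_def Bpp_def algebra_simps)
    then show ?thesis by simp
  qed
  have X: "P * f2 + R * g2 = - ((f2 * g1 - f1 * g2) / Wv)" unfolding P R using Wv0 by (simp add: field_simps)
  have "(f2 * g1 - f1 * g2) / Wv = Bpp" using E2' X by linarith
  then have "f2 * g1 - f1 * g2 = Bpp * Wv" using Wv0 by (simp add: field_simps)
  then show ?thesis unfolding Bpp by (simp add: Wv_def power3_eq_cube power2_eq_square)
qed

lemma alg_S4:
  fixes f g f1 g1 f2 g2 \<delta> w1 w2 :: real
  assumes W: "f1 * g - f * g1 \<noteq> 0"
    and S4: "f2 * g1 - f1 * g2 = \<delta> * (f1 * g - f * g1)^3"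
  shows "\<delta> * ((w1 * g1 - w2 * f1) * (w1 * g - w2 * f) + (w1 * g1 - w2 * f1) * (w1 * g - w2 * f))
    + (((f2 * w2 - g2 * w1) * (f1 * g - f * g1) - (f1 * w2 - g1 * w1) * (f2 * g - f * g2))
         / ((f1 * g - f * g1) * (f1 * g - f * g1)) * ((f1 * w2 - g1 * w1) / (f1 * g - f * g1))
       + ((f2 * w2 - g2 * w1) * (f1 * g - f * g1) - (f1 * w2 - g1 * w1) * (f2 * g - f * g2))
         / ((f1 * g - f * g1) * (f1 * g - f * g1)) * ((f1 * w2 - g1 * w1) / (f1 * g - f * g1))) = 0"
proof -
  define Wv where "Wv = f1 * g - f * g1"
  define N where "N = f1 * w2 - g1 * w1"
  define a where "a = w1 * g - w2 * f"
  have Wv0: "Wv \<noteq> 0" using W by (simp add: Wv_def)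
  have d: "\<delta> = (f2 * g1 - f1 * g2) / Wv^3" using S4 Wv0 by (simp add: Wv_def field_simps)
  have br: "- (f2 * g1 - f1 * g2) * a + (f2 * w2 - g2 * w1) * Wv - N * (f2 * g - f * g2) = 0"
    by (simp add: a_def N_def Wv_def algebra_simps)
  have "\<delta> * ((w1 * g1 - w2 * f1) * a + (w1 * g1 - w2 * f1) * a)
      + (((f2 * w2 - g2 * w1) * Wv - N * (f2 * g - f * g2)) / (Wv * Wv) * (N / Wv)
       + ((f2 * w2 - g2 * w1) * Wv - N * (f2 * g - f * g2)) / (Wv * Wv) * (N / Wv))
      = 2 * N / Wv^3 * (- (f2 * g1 - f1 * g2) * a + (f2 * w2 - g2 * w1) * Wv - N * (f2 * g - f * g2))"
    unfolding d using Wv0 by (simp add: N_def field_simps power3_eq_cube)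
  also have "\<dots> = 0" using br by simp
  finally show ?thesis by (simp add: Wv_def N_def a_def)
qed

lemma C1_facts:
  assumes "C_n_on 1 I f"
  shows "\<And>x. x \<in> I \<Longrightarrow> f differentiable (at x)" "continuous_on I f" "continuous_on I (deriv f)"
proof -
  have a: "\<forall>k<1. \<forall>x\<in>I. nderiv k f differentiable (at x)" and b: "\<forall>k\<le>1. continuous_on I (nderiv k f)"
    using assms unfolding C_n_on_def by blast+
  show "\<And>x. x \<in> I \<Longrightarrow> f differentiable (at x)" using a by simp
  show "continuous_on I f" using b[rule_format, of 0] by simp
  show "continuous_on I (deriv f)" using b[rule_format, of 1] by simp
qed

lemma C2_facts:
  assumes "C_n_on 2 I f"
  shows "\<And>x. x \<in> I \<Longrightarrow> f differentiable (at x)" "\<And>x. x \<in> I \<Longrightarrow> deriv f differentiable (at x)"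
    "C_n_on 1 I f"
proof -
  have a: "\<forall>k<2. \<forall>x\<in>I. nderiv k f differentiable (at x)" and b: "\<forall>k\<le>2. continuous_on I (nderiv k f)"
    using assms unfolding C_n_on_def by blast+
  have a0: "(0::nat) < 2 \<longrightarrow> (\<forall>x\<in>I. nderiv 0 f differentiable (at x))" using a by (rule spec)
  have a1: "(1::nat) < 2 \<longrightarrow> (\<forall>x\<in>I. nderiv 1 f differentiable (at x))" using a by (rule spec)
  show "\<And>x. x \<in> I \<Longrightarrow> f differentiable (at x)" using a0 by simp
  show "\<And>x. x \<in> I \<Longrightarrow> deriv f differentiable (at x)" using a1 by simp
  show "C_n_on 1 I f" unfolding C_n_on_def using a0 b by auto
qed

lemma Bn2_Bn1: "Bn 2 I f g \<Longrightarrow> Bn 1 I f g"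
  unfolding Bn_def using C2_facts(3) by blast

lemma W10_nz:
  assumes "Bn 1 I f g" "x \<in> I"
  shows "W 1 0 f g x \<noteq> 0"
proof -
  have fx: "f x > 0" and C: "C_n_on 1 I f" "C_n_on 1 I g" and dn: "deriv (\<lambda>t. g t / f t) x \<noteq> 0"
    using assms unfolding Bn_def by auto
  have df: "(f has_real_derivative deriv f x) (at x)"
    using C1_facts(1)[OF C(1) assms(2)] DERIV_deriv_iff_real_differentiable by blast
  have dg: "(g has_real_derivative deriv g x) (at x)"
    using C1_facts(1)[OF C(2) assms(2)] DERIV_deriv_iff_real_differentiable by blast
  have "deriv (\<lambda>t. g t / f t) x = (deriv g x * f x - g x * deriv f x) / (f x * f x)"
    by (rule DERIV_imp_deriv[OF DERIV_divide[OF dg df]]) (use fx in simp)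
  then have "deriv g x * f x - g x * deriv f x \<noteq> 0" using dn by auto
  then show ?thesis unfolding W10_eq by (simp add: algebra_simps)
qed

lemma W10_deriv:
  assumes "Bn 2 I f g" "x \<in> I"
  shows "((\<lambda>x. W 1 0 f g x) has_real_derivative W 2 0 f g x) (at x)"
proof -
  have C: "C_n_on 2 I f" "C_n_on 2 I g" using assms unfolding Bn_def by auto
  have df: "(f has_real_derivative deriv f x) (at x)"
    using C2_facts(1)[OF C(1) assms(2)] DERIV_deriv_iff_real_differentiable by blast
  have dg: "(g has_real_derivative deriv g x) (at x)"
    using C2_facts(1)[OF C(2) assms(2)] DERIV_deriv_iff_real_differentiable by blast
  have df1: "(deriv f has_real_derivative deriv (deriv f) x) (at x)"
    using C2_facts(2)[OF C(1) assms(2)] DERIV_deriv_iff_real_differentiable by blast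
  have dg1: "(deriv g has_real_derivative deriv (deriv g) x) (at x)"
    using C2_facts(2)[OF C(2) assms(2)] DERIV_deriv_iff_real_differentiable by blast
  have "((\<lambda>x. deriv f x * g x - f x * deriv g x) has_real_derivative
      (deriv (deriv f) x * g x + deriv g x * deriv f x) - (deriv f x * deriv g x + deriv (deriv g) x * f x)) (at x)"
    by (rule DERIV_diff[OF DERIV_mult[OF df1 dg] DERIV_mult[OF df dg1]])
  then show ?thesis unfolding W10_eq W20_eq by (simp add: algebra_simps)
qed

lemma Bn1_derivs:
  assumes "Bn 1 I f g" "x \<in> I"
  shows "(f has_real_derivative deriv f x) (at x)" "(g has_real_derivative deriv g x) (at x)"
proof -
  have C: "C_n_on 1 I f" "C_n_on 1 I g" using assms unfolding Bn_def by auto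
  show "(f has_real_derivative deriv f x) (at x)"
    using C1_facts(1)[OF C(1) assms(2)] DERIV_deriv_iff_real_differentiable by blast
  show "(g has_real_derivative deriv g x) (at x)"
    using C1_facts(1)[OF C(2) assms(2)] DERIV_deriv_iff_real_differentiable by blast
qed

lemma Bn2_derivs:
  assumes "Bn 2 I f g" "x \<in> I"
  shows "(deriv f has_real_derivative deriv (deriv f) x) (at x)" "(deriv g has_real_derivative deriv (deriv g) x) (at x)"
proof -
  have C: "C_n_on 2 I f" "C_n_on 2 I g" using assms unfolding Bn_def by auto
  show "(deriv f has_real_derivative deriv (deriv f) x) (at x)"
    using C2_facts(2)[OF C(1) assms(2)] DERIV_deriv_iff_real_differentiable by blast
  show "(deriv g has_real_derivative deriv (deriv g) x) (at x)"
    using C2_facts(2)[OF C(2) assms(2)] DERIV_deriv_iff_real_differentiable by blast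
qed

lemma W10_sign:
  assumes "is_interval I" "Bn 1 I f g"
  shows "(\<forall>x\<in>I. W 1 0 f g x > 0) \<or> (\<forall>x\<in>I. W 1 0 f g x < 0)"
proof -
  have C: "C_n_on 1 I f" "C_n_on 1 I g" using assms unfolding Bn_def by auto
  have cW: "continuous_on I (\<lambda>x. W 1 0 f g x)"
    unfolding W10_eq using C1_facts(2,3)[OF C(1)] C1_facts(2,3)[OF C(2)] by (intro continuous_intros)
  show ?thesis
  proof (cases "\<exists>x\<in>I. W 1 0 f g x > 0")
    case True
    then obtain x0 where x0: "x0 \<in> I" "W 1 0 f g x0 > 0" by blast
    have "W 1 0 f g y > 0" if yI: "y \<in> I" for y
    proof (rule ccontr)
      assume "\<not> W 1 0 f g y > 0"
      then have "W 1 0 f g y \<le> 0" by simp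
      then have "min (W 1 0 f g x0) (W 1 0 f g y) \<le> 0" "0 \<le> max (W 1 0 f g x0) (W 1 0 f g y)"
        using x0 by auto
      then obtain z where "z \<in> I" "W 1 0 f g z = 0"
        using value_between[OF cW assms(1) x0(1) yI] by blast
      then show False using W10_nz[OF assms(2)] by blast
    qed
    then show ?thesis by blast
  next
    case False
    then have "W 1 0 f g y < 0" if "y \<in> I" for y
      using W10_nz[OF assms(2) that] that by force
    then show ?thesis by blast
  qed
qed

theorem S1_of_S3:
  assumes Iopen: "open I" and Iint: "is_interval I" and Ine: "I \<noteq> {}" and Bn: "Bn 1 I f g"
    and S3: "\<forall>h. (\<forall>x\<in>I. (h has_real_derivative W 1 0 f g x) (at x)) \<longrightarrow> eq_star I f g h"
  shows "\<exists>h. continuous_on I h \<and> strictly_monotone_on I h \<and> eq_star I f g h"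
proof -
  have C: "C_n_on 1 I f" "C_n_on 1 I g" using Bn unfolding Bn_def by auto
  have cW: "continuous_on I (\<lambda>x. W 1 0 f g x)"
    unfolding W10_eq using C1_facts(2,3)[OF C(1)] C1_facts(2,3)[OF C(2)] by (intro continuous_intros)
  obtain c where c: "c \<in> I" using Ine by blast
  obtain h where hd: "\<forall>x\<in>I. (h has_real_derivative W 1 0 f g x) (at x)"
    using antideriv_open_interval[OF Iopen Iint cW c] by blast
  have eq: "eq_star I f g h" using S3 hd by blast
  have ch: "continuous_on I h"
    by (rule DERIV_continuous_on[where D="\<lambda>x. W 1 0 f g x"]) (use hd has_field_derivative_at_within in blast)
  have "strict_mono_on I h \<or> strict_antimono_on I h"
    using W10_sign[OF Iint Bn]
  proof (elim disjE)
    assume pos: "\<forall>x\<in>I. W 1 0 f g x > 0"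
    have "strict_mono_on I h"
    proof (rule strict_mono_onI)
      fix r s assume rs: "r \<in> I" "s \<in> I" "r < s"
      show "h r < h s"
      proof (rule DERIV_pos_imp_increasing[OF rs(3)])
        fix x assume "r \<le> x" "x \<le> s"
        then have "x \<in> I" using interval_between[OF Iint rs(1,2)] by blast
        then show "\<exists>y. DERIV h x :> y \<and> y > 0" using hd pos by blast
      qed
    qed
    then show ?thesis by simp
  next
    assume neg: "\<forall>x\<in>I. W 1 0 f g x < 0"
    have "strict_antimono_on I h"
      unfolding monotone_on_def
    proof (intro ballI impI)
      fix r s assume rs: "r \<in> I" "s \<in> I" "r < s"
      show "h s < h r"
      proof (rule DERIV_neg_imp_decreasing[OF rs(3)])
        fix x assume "r \<le> x" "x \<le> s"
        then have "x \<in> I" using interval_between[OF Iint rs(1,2)] by blast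
        then show "\<exists>y. DERIV h x :> y \<and> y < 0" using hd neg by blast
      qed
    qed
    then show ?thesis by simp
  qed
  then have "strictly_monotone_on I h" by (simp add: strictly_monotone_on_def)
  then show ?thesis using ch eq by blast
qed

theorem S4_of_S2:
  assumes Iopen: "open I" and Bn: "Bn 2 I f g"
    and S2: "\<forall>x\<in>I. \<alpha> * (f x)^2 + \<beta> * f x * g x + \<gamma> * (g x)^2 = 1"
  shows "\<exists>\<delta>::real. \<forall>x\<in>I. W 2 1 f g x = \<delta> * (W 1 0 f g x)^3"
proof (intro exI ballI)
  fix x assume xI: "x \<in> I"
  have Bn1: "Bn 1 I f g" using Bn2_Bn1[OF Bn] .
  define E where "E t = \<alpha> * (f t * f t) + \<beta> * (f t * g t) + \<gamma> * (g t * g t)" for t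
  define E1 where "E1 t = \<alpha> * (deriv f t * f t + deriv f t * f t) + \<beta> * (deriv f t * g t + deriv g t * f t)
      + \<gamma> * (deriv g t * g t + deriv g t * g t)" for t
  have E1d: "(E has_real_derivative E1 t) (at t)" if tI: "t \<in> I" for t
  proof -
    note df = Bn1_derivs(1)[OF Bn1 tI] and dg = Bn1_derivs(2)[OF Bn1 tI]
    show ?thesis unfolding E_def[abs_def] E1_def
      by (intro DERIV_add DERIV_cmult DERIV_mult df dg)
  qed
  have E1z: "E1 t = 0" if tI: "t \<in> I" for t
  proof -
    have "(E has_real_derivative 0) (at t)"
    proof (rule has_field_derivative_transform_within_open[OF DERIV_const Iopen tI])
      fix y assume "y \<in> I"
      then show "1 = E y" using S2 by (simp add: E_def power2_eq_square algebra_simps)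
    qed
    then show ?thesis using DERIV_unique E1d[OF tI] by blast
  qed
  note df = Bn1_derivs(1)[OF Bn1 xI] and dg = Bn1_derivs(2)[OF Bn1 xI]
  note df1 = Bn2_derivs(1)[OF Bn xI] and dg1 = Bn2_derivs(2)[OF Bn xI]
  define E2 where "E2 = \<alpha> * ((deriv (deriv f) x * f x + deriv f x * deriv f x) + (deriv (deriv f) x * f x + deriv f x * deriv f x))
     + \<beta> * ((deriv (deriv f) x * g x + deriv g x * deriv f x) + (deriv (deriv g) x * f x + deriv f x * deriv g x))
     + \<gamma> * ((deriv (deriv g) x * g x + deriv g x * deriv g x) + (deriv (deriv g) x * g x + deriv g x * deriv g x))"
  have E2d: "(E1 has_real_derivative E2) (at x)"
    unfolding E1_def[abs_def] E2_def
    by (intro DERIV_add DERIV_cmult DERIV_mult df dg df1 dg1)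
  have "(E1 has_real_derivative 0) (at x)"
  proof (rule has_field_derivative_transform_within_open[OF DERIV_const Iopen xI])
    fix y assume "y \<in> I"
    then show "0 = E1 y" using E1z by simp
  qed
  then have E2z: "E2 = 0" using DERIV_unique E2d by blast
  have W0: "deriv f x * g x - f x * deriv g x \<noteq> 0" using W10_nz[OF Bn1 xI] unfolding W10_eq .
  have "deriv (deriv f) x * deriv g x - deriv f x * deriv (deriv g) x
      = (\<alpha> * \<gamma> - \<beta>^2 / 4) * (deriv f x * g x - f x * deriv g x)^3"
  proof (rule alg_S2S4[OF W0])
    show "\<alpha> * (f x)\<^sup>2 + \<beta> * f x * g x + \<gamma> * (g x)\<^sup>2 = 1" using S2 xI by blast
    show "2 * \<alpha> * f x * deriv f x + \<beta> * (deriv f x * g x + f x * deriv g x) + 2 * \<gamma> * g x * deriv g x = 0"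
      using E1z[OF xI] by (simp add: E1_def algebra_simps)
    show "2 * \<alpha> * (deriv f x * deriv f x + f x * deriv (deriv f) x) +
        \<beta> * (deriv (deriv f) x * g x + 2 * deriv f x * deriv g x + f x * deriv (deriv g) x) +
        2 * \<gamma> * (deriv g x * deriv g x + g x * deriv (deriv g) x) = 0"
      using E2z by (simp add: E2_def algebra_simps)
  qed
  then show "W 2 1 f g x = (\<alpha> * \<gamma> - \<beta>^2 / 4) * (W 1 0 f g x)^3"
    unfolding W21_eq W10_eq .
qed

theorem S2_of_S4:
  assumes Iopen: "open I" and Iint: "is_interval I" and Ine: "I \<noteq> {}" and Bn: "Bn 2 I f g"
    and S4: "\<forall>x\<in>I. W 2 1 f g x = \<delta> * (W 1 0 f g x)^3"
  shows "\<exists>\<alpha> \<beta> \<gamma>::real. \<forall>x\<in>I. \<alpha> * (f x)^2 + \<beta> * f x * g x + \<gamma> * (g x)^2 = 1"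
proof -
  have Bn1: "Bn 1 I f g" using Bn2_Bn1[OF Bn] .
  obtain x0 where x0: "x0 \<in> I" using Ine by blast
  define Wf where "Wf t = W 1 0 f g t" for t
  define \<phi> where "\<phi> w1 w2 t = \<delta> * ((w1 * g t - w2 * f t) * (w1 * g t - w2 * f t))
      + ((deriv f t * w2 - deriv g t * w1) / Wf t) * ((deriv f t * w2 - deriv g t * w1) / Wf t)" for w1 w2 t
  have d0: "(\<phi> w1 w2 has_real_derivative 0) (at t)" if tI: "t \<in> I" for w1 w2 t
  proof -
    note df = Bn1_derivs(1)[OF Bn1 tI] and dg = Bn1_derivs(2)[OF Bn1 tI]
    note df1 = Bn2_derivs(1)[OF Bn tI] and dg1 = Bn2_derivs(2)[OF Bn tI]
    have dW: "(Wf has_real_derivative W 2 0 f g t) (at t)" unfolding Wf_def[abs_def] by (rule W10_deriv[OF Bn tI])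
    have Wne: "Wf t \<noteq> 0" unfolding Wf_def using W10_nz[OF Bn1 tI] .
    have da: "((\<lambda>t. w1 * g t - w2 * f t) has_real_derivative w1 * deriv g t - w2 * deriv f t) (at t)"
      by (intro DERIV_diff DERIV_cmult df dg)
    have dN: "((\<lambda>t. deriv f t * w2 - deriv g t * w1) has_real_derivative
        deriv (deriv f) t * w2 - deriv (deriv g) t * w1) (at t)"
      by (intro DERIV_diff DERIV_cmult_right df1 dg1)
    have db: "((\<lambda>t. (deriv f t * w2 - deriv g t * w1) / Wf t) has_real_derivative
        ((deriv (deriv f) t * w2 - deriv (deriv g) t * w1) * Wf t - (deriv f t * w2 - deriv g t * w1) * W 2 0 f g t)
        / (Wf t * Wf t)) (at t)"
      by (rule DERIV_divide[OF dN dW Wne])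
    have dphi: "(\<phi> w1 w2 has_real_derivative
       \<delta> * ((w1 * deriv g t - w2 * deriv f t) * (w1 * g t - w2 * f t) + (w1 * deriv g t - w2 * deriv f t) * (w1 * g t - w2 * f t))
       + (((deriv (deriv f) t * w2 - deriv (deriv g) t * w1) * Wf t - (deriv f t * w2 - deriv g t * w1) * W 2 0 f g t)
        / (Wf t * Wf t) * ((deriv f t * w2 - deriv g t * w1) / Wf t)
        + ((deriv (deriv f) t * w2 - deriv (deriv g) t * w1) * Wf t - (deriv f t * w2 - deriv g t * w1) * W 2 0 f g t)
        / (Wf t * Wf t) * ((deriv f t * w2 - deriv g t * w1) / Wf t))) (at t)"
      unfolding \<phi>_def[abs_def]
      by (rule DERIV_add[OF DERIV_cmult[OF DERIV_mult[OF da da]] DERIV_mult[OF db db]])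
    have W0: "deriv f t * g t - f t * deriv g t \<noteq> 0" using Wne unfolding Wf_def W10_eq .
    have S4t: "deriv (deriv f) t * deriv g t - deriv f t * deriv (deriv g) t = \<delta> * (deriv f t * g t - f t * deriv g t)^3"
      using S4 tI unfolding W21_eq W10_eq by blast
    have "\<delta> * ((w1 * deriv g t - w2 * deriv f t) * (w1 * g t - w2 * f t) + (w1 * deriv g t - w2 * deriv f t) * (w1 * g t - w2 * f t))
       + (((deriv (deriv f) t * w2 - deriv (deriv g) t * w1) * Wf t - (deriv f t * w2 - deriv g t * w1) * W 2 0 f g t)
        / (Wf t * Wf t) * ((deriv f t * w2 - deriv g t * w1) / Wf t)
        + ((deriv (deriv f) t * w2 - deriv (deriv g) t * w1) * Wf t - (deriv f t * w2 - deriv g t * w1) * W 2 0 f g t)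
        / (Wf t * Wf t) * ((deriv f t * w2 - deriv g t * w1) / Wf t)) = 0"
      unfolding Wf_def W10_eq W20_eq by (rule alg_S4[OF W0 S4t])
    then show ?thesis using dphi by simp
  qed
  have const: "\<phi> w1 w2 t = \<phi> w1 w2 x0" if "t \<in> I" for w1 w2 t
  proof -
    have "\<exists>c. \<forall>t\<in>I. \<phi> w1 w2 t = c"
      by (rule has_field_derivative_zero_constant)
         (use is_interval_convex[OF Iint] d0 has_field_derivative_at_within in blast)+
    then show ?thesis using that x0 by metis
  qed
  define W0 where "W0 = Wf x0"
  define \<alpha> where "\<alpha> = \<delta> * (g x0)^2 + (deriv g x0)^2 / W0^2"
  define \<beta> where "\<beta> = - 2 * \<delta> * f x0 * g x0 - 2 * deriv f x0 * deriv g x0 / W0^2"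
  define \<gamma> where "\<gamma> = \<delta> * (f x0)^2 + (deriv f x0)^2 / W0^2"
  have W0ne: "W0 \<noteq> 0" unfolding W0_def Wf_def using W10_nz[OF Bn1 x0] .
  show ?thesis
  proof (intro exI ballI)
    fix y assume yI: "y \<in> I"
    have Wy: "Wf y \<noteq> 0" unfolding Wf_def using W10_nz[OF Bn1 yI] .
    have "\<phi> (f y) (g y) y = 1"
    proof -
      have We: "Wf y = deriv f y * g y - deriv g y * f y" unfolding Wf_def W10_eq by (simp add: algebra_simps)
      have "(deriv f y * g y - deriv g y * f y) / Wf y = 1"
        using Wy unfolding We by simp
      then show ?thesis by (simp add: \<phi>_def)
    qed
    then have "\<phi> (f y) (g y) x0 = 1" using const[OF yI] by simp
    moreover have "\<phi> (f y) (g y) x0 = \<alpha> * (f y)^2 + \<beta> * f y * g y + \<gamma> * (g y)^2"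
      using W0ne unfolding \<phi>_def \<alpha>_def \<beta>_def \<gamma>_def W0_def[symmetric]
      by (simp add: field_simps power2_eq_square)
    ultimately show "\<alpha> * (f y)^2 + \<beta> * f y * g y + \<gamma> * (g y)^2 = 1" by simp
  qed
qed

theorem S5_of_S4:
  assumes Iopen: "open I" and Bn: "Bn 2 I f g"
    and S4: "\<forall>x\<in>I. W 2 1 f g x = \<delta> * (W 1 0 f g x)^3"
  shows "\<forall>x\<in>I. (Psi f g has_real_derivative 2 * Phi f g x * Psi f g x) (at x)"
proof
  fix x assume xI: "x \<in> I"
  have Bn1: "Bn 1 I f g" using Bn2_Bn1[OF Bn] .
  have eqP: "Psi f g t = - \<delta> * (W 1 0 f g t * W 1 0 f g t)" if "t \<in> I" for t
    using S4 that W10_nz[OF Bn1 that] by (simp add: Psi_def power3_eq_cube)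
  have dW: "((\<lambda>t. W 1 0 f g t) has_real_derivative W 2 0 f g x) (at x)" by (rule W10_deriv[OF Bn xI])
  have d: "((\<lambda>t. - \<delta> * (W 1 0 f g t * W 1 0 f g t)) has_real_derivative
      - \<delta> * (W 2 0 f g x * W 1 0 f g x + W 2 0 f g x * W 1 0 f g x)) (at x)"
    by (rule DERIV_cmult[OF DERIV_mult[OF dW dW]])
  have d2: "(Psi f g has_real_derivative - \<delta> * (W 2 0 f g x * W 1 0 f g x + W 2 0 f g x * W 1 0 f g x)) (at x)"
    by (rule has_field_derivative_transform_within_open[OF d Iopen xI]) (use eqP in simp)
  have eqv: "- \<delta> * (W 2 0 f g x * W 1 0 f g x + W 2 0 f g x * W 1 0 f g x) = 2 * Phi f g x * Psi f g x"
    using eqP[OF xI] W10_nz[OF Bn1 xI] by (simp add: Phi_def field_simps)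
  show "(Psi f g has_real_derivative 2 * Phi f g x * Psi f g x) (at x)" using d2 unfolding eqv .
qed

theorem S4_of_S5:
  assumes Iopen: "open I" and Iint: "is_interval I" and Ine: "I \<noteq> {}" and Bn: "Bn 2 I f g"
    and S5: "\<forall>x\<in>I. (Psi f g has_real_derivative 2 * Phi f g x * Psi f g x) (at x)"
  shows "\<exists>\<delta>::real. \<forall>x\<in>I. W 2 1 f g x = \<delta> * (W 1 0 f g x)^3"
proof -
  have Bn1: "Bn 1 I f g" using Bn2_Bn1[OF Bn] .
  define \<psi> where "\<psi> t = Psi f g t / (W 1 0 f g t * W 1 0 f g t)" for t
  have d0: "(\<psi> has_real_derivative 0) (at x)" if xI: "x \<in> I" for x
  proof -
    have dW: "((\<lambda>t. W 1 0 f g t) has_real_derivative W 2 0 f g x) (at x)" by (rule W10_deriv[OF Bn xI])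
    have Wne: "W 1 0 f g x \<noteq> 0" using W10_nz[OF Bn1 xI] .
    have d: "(\<psi> has_real_derivative
        (2 * Phi f g x * Psi f g x * (W 1 0 f g x * W 1 0 f g x)
          - Psi f g x * (W 2 0 f g x * W 1 0 f g x + W 2 0 f g x * W 1 0 f g x))
        / ((W 1 0 f g x * W 1 0 f g x) * (W 1 0 f g x * W 1 0 f g x))) (at x)"
      unfolding \<psi>_def[abs_def]
      by (rule DERIV_divide[OF S5[rule_format, OF xI] DERIV_mult[OF dW dW]]) (use Wne in simp)
    have "2 * Phi f g x * Psi f g x * (W 1 0 f g x * W 1 0 f g x)
          - Psi f g x * (W 2 0 f g x * W 1 0 f g x + W 2 0 f g x * W 1 0 f g x) = 0"
      using Wne by (simp add: Phi_def field_simps)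
    then have eq0: "(2 * Phi f g x * Psi f g x * (W 1 0 f g x * W 1 0 f g x)
          - Psi f g x * (W 2 0 f g x * W 1 0 f g x + W 2 0 f g x * W 1 0 f g x))
        / ((W 1 0 f g x * W 1 0 f g x) * (W 1 0 f g x * W 1 0 f g x)) = 0" by simp
    show ?thesis using d unfolding eq0 .
  qed
  obtain c where c: "\<And>t. t \<in> I \<Longrightarrow> \<psi> t = c"
  proof -
    have "\<exists>c. \<forall>t\<in>I. \<psi> t = c"
      by (rule has_field_derivative_zero_constant)
         (use is_interval_convex[OF Iint] d0 has_field_derivative_at_within in blast)+
    then show ?thesis using that by blast
  qed
  show ?thesis
  proof (intro exI ballI)
    fix x assume xI: "x \<in> I"
    have Wne: "W 1 0 f g x \<noteq> 0" using W10_nz[OF Bn1 xI] .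
    have "Psi f g x = c * (W 1 0 f g x * W 1 0 f g x)" using c[OF xI] Wne by (simp add: \<psi>_def field_simps)
    then show "W 2 1 f g x = (- c) * (W 1 0 f g x)^3"
      using Wne by (simp add: Psi_def field_simps power3_eq_cube)
  qed
qed

theorem theorem3p3:
  fixes I :: "real set" and f g :: "real \<Rightarrow> real"
  assumes "open I" and "is_interval I" and "I \<noteq> {}"
    and "B0 I f g"
  defines "S1 \<equiv> (\<exists>h. continuous_on I h \<and> strictly_monotone_on I h \<and> eq_star I f g h)"
    and "S2 \<equiv> (\<exists>\<alpha> \<beta> \<gamma>::real. \<forall>x\<in>I. \<alpha> * (f x)^2 + \<beta> * f x * g x + \<gamma> * (g x)^2 = 1)"
    and "S3 \<equiv> (\<forall>h. (\<forall>x\<in>I. (h has_real_derivative W 1 0 f g x) (at x)) \<longrightarrow> eq_star I f g h)"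
    and "S4 \<equiv> (\<exists>\<delta>::real. \<forall>x\<in>I. W 2 1 f g x = \<delta> * (W 1 0 f g x)^3)"
    and "S5 \<equiv> (\<forall>x\<in>I. (Psi f g has_real_derivative 2 * Phi f g x * Psi f g x) (at x))"
  shows "(S1 \<longleftrightarrow> S2)
    \<and> (Bn 1 I f g \<longrightarrow> (S1 \<longleftrightarrow> S2) \<and> (S2 \<longleftrightarrow> S3))
    \<and> (Bn 2 I f g \<longrightarrow> (S1 \<longleftrightarrow> S2) \<and> (S2 \<longleftrightarrow> S3) \<and> (S3 \<longleftrightarrow> S4) \<and> (S4 \<longleftrightarrow> S5))"
proof -
  have fpos: "\<And>x. x \<in> I \<Longrightarrow> f x > 0" and usmo: "strictly_monotone_on I (\<lambda>x. g x / f x)"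
    and ucont: "continuous_on I (\<lambda>x. g x / f x)"
    using assms(4) unfolding B0_def by auto
  have uinj: "inj_on (\<lambda>x. g x / f x) I" using smo_inj[OF usmo] .
  have S12: "S1 \<Longrightarrow> S2"
  proof -
    assume S1
    then obtain h where h: "continuous_on I h" "strictly_monotone_on I h" "eq_star I f g h"
      unfolding S1_def by blast
    have hinj: "inj_on h I" using smo_inj[OF h(2)] .
    have "partB I f g h"
    proof (unfold_locales)
      show "open I" "is_interval I" "I \<noteq> {}" by (fact assms)+
      show "\<And>x. x \<in> I \<Longrightarrow> f x > 0" by (fact fpos)
      show "continuous_on I (\<lambda>t. g t / f t)" by (fact ucont)
      show "inj_on (\<lambda>t. g t / f t) I" by (fact uinj)
      show "continuous_on I h" by (fact h(1))
      show "inj_on h I" by (fact hinj)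
      show "\<exists>z\<in>I. g z / f z = (g x + g y) / (f x + f y) \<and> h z = (h x + h y) / 2"
        if "x \<in> I" "y \<in> I" for x y
        by (rule eq_starD[OF assms(2) _ ucont uinj h(1) hinj h(3) that]) (use fpos in blast)
    qed
    then show S2 unfolding S2_def using partB.conic by blast
  qed
  have pA: "partA I f g \<alpha> \<beta> \<gamma>" if "\<forall>x\<in>I. \<alpha> * (f x)^2 + \<beta> * f x * g x + \<gamma> * (g x)^2 = 1" for \<alpha> \<beta> \<gamma>
    by (unfold_locales) (use assms(1-3) fpos ucont usmo that in auto)
  have S21: "S2 \<Longrightarrow> S1"
  proof -
    assume S2
    then obtain \<alpha> \<beta> \<gamma> where c: "\<forall>x\<in>I. \<alpha> * (f x)^2 + \<beta> * f x * g x + \<gamma> * (g x)^2 = 1"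
      unfolding S2_def by blast
    show S1 unfolding S1_def using partA.S1_of_S2[OF pA[OF c]] .
  qed
  have B1: "(S2 \<longleftrightarrow> S3)" if Bn1: "Bn 1 I f g"
  proof
    assume S2
    then obtain \<alpha> \<beta> \<gamma> where c: "\<forall>x\<in>I. \<alpha> * (f x)^2 + \<beta> * f x * g x + \<gamma> * (g x)^2 = 1"
      unfolding S2_def by blast
    have C: "C_n_on 1 I f" "C_n_on 1 I g" using Bn1 unfolding Bn_def by auto
    show S3 unfolding S3_def
      by (rule partA.S3_of_S2[OF pA[OF c]]) (use C1_facts(1)[OF C(1)] C1_facts(1)[OF C(2)] in auto)
  next
    assume S3
    then have S1 using S1_of_S3[OF assms(1-3) Bn1] unfolding S3_def S1_def by blast
    then show S2 using S12 by blast
  qed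
  have B2: "(S2 \<longleftrightarrow> S4) \<and> (S4 \<longleftrightarrow> S5)" if Bn2: "Bn 2 I f g"
  proof (intro conjI iffI)
    assume S2
    then obtain \<alpha> \<beta> \<gamma> where c: "\<forall>x\<in>I. \<alpha> * (f x)^2 + \<beta> * f x * g x + \<gamma> * (g x)^2 = 1"
      unfolding S2_def by blast
    show S4 unfolding S4_def by (rule S4_of_S2[OF assms(1) Bn2 c])
  next
    assume S4
    then obtain \<delta> where d: "\<forall>x\<in>I. W 2 1 f g x = \<delta> * (W 1 0 f g x)^3" unfolding S4_def by blast
    show S2 unfolding S2_def by (rule S2_of_S4[OF assms(1-3) Bn2 d])
  next
    assume S4
    then obtain \<delta> where d: "\<forall>x\<in>I. W 2 1 f g x = \<delta> * (W 1 0 f g x)^3" unfolding S4_def by blast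
    show S5 unfolding S5_def by (rule S5_of_S4[OF assms(1) Bn2 d])
  next
    assume S5
    then show S4 unfolding S4_def S5_def by (rule S4_of_S5[OF assms(1-3) Bn2])
  qed
  show ?thesis using S12 S21 B1 B2 Bn2_Bn1 by blast
qed

end
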